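(* Let $d \geq 1$, $\alpha < 1/d$ and $\delta > 0$. Then with overwhelming probability a random graph \[ H \sim H\big(n-2d,\ n^{-d\alpha}(1-n^{-\alpha})^d,\ n^{-d\alpha}(1-n^{-\alpha})^d,\ 0,\ 0,\ 1-n^{-\alpha}\big) \] has spectral gap of its normalized Laplacian larger than $1-\delta$.
   Context: For $N\in\mathbb N$ and probabilities $p_A,p_B,p_{eA},p_{eB},p_{eAB}$, $H(N,p_A,p_B,p_{eA},p_{eB},p_{eAB})$ is the random graph obtained by putting each element of $[N]$ independently into $A$ with probability $p_A$, into $B$ with probability $p_B$, or discarding it otherwise; the vertex set is $A\cup B$, and pairs inside $A$, inside $B$, and between $A$ and $B$ are edges independently with probabilities $p_{eA}$, $p_{eB}$, $p_{eAB}$ respectively. (Here $H$ is thus a random bipartite graph between $A$ and $B$.) For a graph without isolated vertices with adjacency matrix $A$ and degree matrix $D$, the normalized Laplacian is $I - D^{-1/2}AD^{-1/2}$ and its spectral gap is its second smallest eigenvalue $\lambda_2$. Here $\alpha>0$. "With overwhelming probability" means with probability at least $1-n^{-\omega(1)}$ as $n\to\infty$. *)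

theory Defs
  imports "HOL-Probability.Probability" "Jordan_Normal_Form.Char_Poly"
begin

text \<open>A finite simple graph is a pair (V, E) with V a finite set of natural numbers
  and E a symmetric irreflexive set of ordered pairs of vertices.\<close>

definition deg :: "nat set \<Rightarrow> (nat \<times> nat) set \<Rightarrow> nat \<Rightarrow> nat" where
  "deg V E v = card {u \<in> V. (v, u) \<in> E}"

definition adj_mat :: "nat set \<Rightarrow> (nat \<times> nat) set \<Rightarrow> real mat" where
  "adj_mat V E = (let vs = sorted_list_of_set V; n = length vs in
     mat n n (\<lambda>(i, j). if (vs ! i, vs ! j) \<in> E then 1 else 0))"

definition deg_inv_sqrt_mat :: "nat set \<Rightarrow> (nat \<times> nat) set \<Rightarrow> real mat" where
  "deg_inv_sqrt_mat V E = (let vs = sorted_list_of_set V; n = length vs in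
     mat n n (\<lambda>(i, j). if i = j then 1 / sqrt (real (deg V E (vs ! i))) else 0))"

definition norm_laplacian :: "nat set \<Rightarrow> (nat \<times> nat) set \<Rightarrow> real mat" where
  "norm_laplacian V E = 1\<^sub>m (card V) - deg_inv_sqrt_mat V E * adj_mat V E * deg_inv_sqrt_mat V E"

text \<open>Multiset of (real) eigenvalues, counted with algebraic multiplicity
  (for a real symmetric matrix the characteristic polynomial splits over the reals).\<close>
definition eigvals_mset :: "real mat \<Rightarrow> real multiset" where
  "eigvals_mset M = (\<Sum>x\<in>{x. poly (char_poly M) x = 0}. replicate_mset (order x (char_poly M)) x)"

definition spectral_gap :: "nat set \<Rightarrow> (nat \<times> nat) set \<Rightarrow> real" where
  "spectral_gap V E = sorted_list_of_multiset (eigvals_mset (norm_laplacian V E)) ! 1"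

text \<open>The event "the graph has no isolated vertices (so the normalized Laplacian is defined),
  has at least two vertices (so lambda_2 exists), and lambda_2 > t".\<close>
definition gap_greater :: "real \<Rightarrow> nat set \<times> (nat \<times> nat) set \<Rightarrow> bool" where
  "gap_greater t G = (case G of (V, E) \<Rightarrow>
      card V \<ge> 2 \<and> (\<forall>v\<in>V. deg V E v > 0) \<and> spectral_gap V E > t)"

datatype lab = InA | InB | Out

definition label_pmf :: "real \<Rightarrow> real \<Rightarrow> lab pmf" where
  "label_pmf pA pB = pmf_of_list [(InA, pA), (InB, pB), (Out, 1 - pA - pB)]"

definition edge_prob :: "real \<Rightarrow> real \<Rightarrow> real \<Rightarrow> lab \<Rightarrow> lab \<Rightarrow> real" where
  "edge_prob peA peB peAB l1 l2 =
     (if l1 = Out \<or> l2 = Out then 0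
      else if l1 = InA \<and> l2 = InA then peA
      else if l1 = InB \<and> l2 = InB then peB
      else peAB)"

definition random_H :: "nat \<Rightarrow> real \<Rightarrow> real \<Rightarrow> real \<Rightarrow> real \<Rightarrow> real \<Rightarrow>
    (nat set \<times> (nat \<times> nat) set) pmf" where
  "random_H N pA pB peA peB peAB =
     do {
       lab \<leftarrow> Pi_pmf {..<N} Out (\<lambda>_. label_pmf pA pB);
       e \<leftarrow> Pi_pmf {(i, j). i < j \<and> j < N} False
              (\<lambda>(i, j). bernoulli_pmf (edge_prob peA peB peAB (lab i) (lab j)));
       return_pmf ({i. i < N \<and> lab i \<noteq> Out},
                   {(i, j). i < N \<and> j < N \<and> i \<noteq> j \<and> lab i \<noteq> Out \<and> lab j \<noteq> Out
                            \<and> e (min i j, max i j)})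
     }"

end

theory Submission
  imports Defs "Jordan_Normal_Form.Schur_Decomposition" "HOL-Real_Asymp.Real_Asymp"
begin

lemma map_poly_of_real_prod:
  "map_poly (of_real :: real \<Rightarrow> complex) (\<Prod>e\<leftarrow>es. [:- e, 1:]) = (\<Prod>e\<leftarrow>es. [:- of_real e, 1:])"
proof -
  interpret m: map_poly_comm_ring_hom "of_real :: real \<Rightarrow> complex" ..
  show ?thesis
  proof (induction es)
    case (Cons a es)
    have h: "map_poly (of_real :: real \<Rightarrow> complex) [:-a,1:] = [:-of_real a, 1:]" by simp
    show ?case by (simp only: prod_list.Cons list.map m.hom_mult h Cons)
  qed simp
qed

lemma map_poly_of_real_inj:
  assumes "map_poly (of_real :: real \<Rightarrow> complex) p = map_poly of_real q"
  shows "p = q"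
proof (rule poly_eqI)
  fix i
  have "coeff (map_poly (of_real :: real \<Rightarrow> complex) p) i = coeff (map_poly of_real q) i"
    using assms by simp
  then show "coeff p i = coeff q i" by (simp add: coeff_map_poly)
qed

lemma sym_eigenvalue_real:
  fixes M :: "real mat"
  assumes M: "M \<in> carrier_mat n n" and sym: "\<And>i j. i < n \<Longrightarrow> j < n \<Longrightarrow> M $$ (i,j) = M $$ (j,i)"
    and ev: "eigenvalue (map_mat complex_of_real M) a"
  shows "a = complex_of_real (Re a)"
proof -
  let ?Mc = "map_mat complex_of_real M"
  from ev obtain v where v: "v \<in> carrier_vec n" "v \<noteq> 0\<^sub>v n" "?Mc *\<^sub>v v = a \<cdot>\<^sub>v v"
    unfolding eigenvalue_def eigenvector_def using M by auto
  define s where "s = (\<Sum>i<n. \<Sum>j<n. cnj (v $ i) * complex_of_real (M $$ (i,j)) * v $ j)"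
  define w where "w = (\<Sum>i<n. cnj (v $ i) * v $ i)"
  have row: "(?Mc *\<^sub>v v) $ i = (\<Sum>j<n. complex_of_real (M $$ (i,j)) * v $ j)" if "i < n" for i
    using that M v(1) by (auto simp: mult_mat_vec_def scalar_prod_def lessThan_atLeast0 intro!: sum.cong)
  have "s = (\<Sum>i<n. cnj (v $ i) * (?Mc *\<^sub>v v) $ i)"
    unfolding s_def by (auto simp: row sum_distrib_left mult.assoc intro!: sum.cong)
  also have "\<dots> = (\<Sum>i<n. cnj (v $ i) * (a * v $ i))"
    using v(3) v(1) by (auto intro!: sum.cong)
  also have "\<dots> = a * w" unfolding w_def by (simp add: sum_distrib_left algebra_simps)
  finally have s1: "s = a * w" .
  have "cnj s = (\<Sum>i<n. \<Sum>j<n. v $ i * complex_of_real (M $$ (i,j)) * cnj (v $ j))"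
    unfolding s_def by (simp add: cnj_sum)
  also have "\<dots> = (\<Sum>j<n. \<Sum>i<n. v $ i * complex_of_real (M $$ (i,j)) * cnj (v $ j))"
    by (rule sum.swap)
  also have "\<dots> = s" unfolding s_def
    by (auto simp: sym intro!: sum.cong)
  finally have sr: "cnj s = s" .
  have wr: "w = complex_of_real (\<Sum>i<n. (cmod (v $ i))^2)"
    unfolding w_def of_real_sum by (intro sum.cong refl) (metis complex_norm_square mult.commute of_real_power)
  have "\<exists>i<n. v $ i \<noteq> 0"
  proof (rule ccontr)
    assume "\<not> ?thesis"
    then have "v = 0\<^sub>v n" using v(1) by (intro eq_vecI) auto
    with v(2) show False by simp
  qed
  then obtain i where i: "i < n" "v $ i \<noteq> 0" by auto
  have "(\<Sum>i<n. (cmod (v $ i))^2) \<ge> (cmod (v $ i))^2"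
    by (rule member_le_sum) (use i in auto)
  moreover have "(cmod (v $ i))^2 > 0" using i by simp
  ultimately have wpos: "(\<Sum>i<n. (cmod (v $ i))^2) > 0" by linarith
  have wne: "w \<noteq> 0" using wpos by (metis less_irrefl of_real_eq_0_iff wr)
  have "a = s / w" using s1 wne by simp
  then have "cnj a = a" using sr wr by (simp add: complex_cnj_divide)
  then show ?thesis by (metis Reals_cnj_iff complex_is_Real_iff of_real_Re)
qed

lemma sym_char_poly_real_split:
  fixes M :: "real mat"
  assumes M: "M \<in> carrier_mat n n" and sym: "\<And>i j. i < n \<Longrightarrow> j < n \<Longrightarrow> M $$ (i,j) = M $$ (j,i)"
  shows "\<exists>es. char_poly M = (\<Prod>e\<leftarrow>es. [:- e, 1:]) \<and> length es = n"
proof -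
  let ?Mc = "map_mat complex_of_real M"
  have Mc: "?Mc \<in> carrier_mat n n" using M by simp
  obtain as where cf: "char_poly ?Mc = (\<Prod>a\<leftarrow>as. [:- a, 1:])" and len: "length as = n"
    using char_poly_factorized[OF Mc] by auto
  have real: "a = complex_of_real (Re a)" if "a \<in> set as" for a
  proof -
    have "poly (char_poly ?Mc) a = 0" unfolding cf using that
      by (induction as) (auto simp: poly_prod_list)
    then have "eigenvalue ?Mc a" using eigenvalue_root_char_poly[OF Mc] by simp
    then show ?thesis using sym_eigenvalue_real[OF M sym] by blast
  qed
  define es where "es = map Re as"
  have "as = map complex_of_real es" unfolding es_def using real
    by (induction as) auto
  then have "map_poly complex_of_real (char_poly M) = map_poly complex_of_real (\<Prod>e\<leftarrow>es. [:- e, 1:])"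
  proof -
    have "map_poly complex_of_real (char_poly M) = char_poly ?Mc"
      by (rule of_real_hom.char_poly_hom[OF M, symmetric])
    also have "\<dots> = (\<Prod>e\<leftarrow>es. [:- complex_of_real e, 1:])"
      using cf \<open>as = map complex_of_real es\<close> by (simp add: o_def)
    finally show ?thesis by (simp add: map_poly_of_real_prod)
  qed
  then have "char_poly M = (\<Prod>e\<leftarrow>es. [:- e, 1:])" by (rule map_poly_of_real_inj)
  then show ?thesis using len es_def by (metis length_map)
qed

definition mtr :: "real mat \<Rightarrow> real" where "mtr X = (\<Sum>i<dim_row X. X $$ (i,i))"

lemma mtr_comm:
  assumes X: "X \<in> carrier_mat n n" and Y: "Y \<in> carrier_mat n n"
  shows "mtr (X * Y) = mtr (Y * X)"
proof -
  have "mtr (X * Y) = (\<Sum>i<n. \<Sum>k<n. X $$ (i,k) * Y $$ (k,i))"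
    unfolding mtr_def using X Y
    by (auto simp: scalar_prod_def lessThan_atLeast0 intro!: sum.cong)
  also have "\<dots> = (\<Sum>k<n. \<Sum>i<n. Y $$ (k,i) * X $$ (i,k))"
    by (subst sum.swap) (simp add: mult.commute)
  also have "\<dots> = mtr (Y * X)"
    unfolding mtr_def using X Y
    by (auto simp: scalar_prod_def lessThan_atLeast0 intro!: sum.cong)
  finally show ?thesis .
qed

lemma mtr_similar:
  assumes P: "P \<in> carrier_mat n n" and X: "X \<in> carrier_mat n n" and Q: "Q \<in> carrier_mat n n"
    and QP: "Q * P = 1\<^sub>m n"
  shows "mtr (P * X * Q) = mtr X"
proof -
  have "mtr (P * X * Q) = mtr (Q * (P * X))"
    by (rule mtr_comm) (use P X Q in auto)
  also have "Q * (P * X) = (Q * P) * X" using P X Q by (simp add: assoc_mult_mat)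
  also have "\<dots> = X" using QP X by simp
  finally show ?thesis .
qed

lemma eig_sums:
  fixes M :: "real mat"
  assumes M: "M \<in> carrier_mat n n" and cp: "char_poly M = (\<Prod>e\<leftarrow>es. [:- e, 1:])"
  shows "sum_list es = (\<Sum>i<n. M $$ (i,i))"
    and "(\<Sum>e\<leftarrow>es. e^2) = (\<Sum>i<n. \<Sum>j<n. M $$ (i,j) * M $$ (j,i))"
proof -
  obtain B P Q where sd: "schur_decomposition M es = (B,P,Q)" by (cases "schur_decomposition M es") auto
  from schur_decomposition[OF M cp sd]
  have wit: "similar_mat_wit M B P Q" and ut: "upper_triangular B" and dg: "diag_mat B = es" by auto
  from wit M have B: "B \<in> carrier_mat n n" and P: "P \<in> carrier_mat n n" and Q: "Q \<in> carrier_mat n n"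
    and QP: "Q * P = 1\<^sub>m n" and MPBQ: "M = P * B * Q"
    unfolding similar_mat_wit_def Let_def by auto
  have es: "es = map (\<lambda>i. B $$ (i,i)) [0..<n]" using dg B unfolding diag_mat_def by auto
  have trM: "mtr M = (\<Sum>i<n. M $$ (i,i))" unfolding mtr_def using M by simp
  have "mtr M = mtr B" unfolding MPBQ by (rule mtr_similar[OF P B Q QP])
  also have "\<dots> = sum_list es" unfolding es mtr_def using B
    by (simp add: sum_list_sum_nth lessThan_atLeast0)
  finally show "sum_list es = (\<Sum>i<n. M $$ (i,i))" using trM by simp
  have MM: "M * M = P * (B * B) * Q"
  proof -
    have "M ^\<^sub>m 2 = P * B ^\<^sub>m 2 * Q" by (rule similar_mat_wit_pow_id[OF wit])
    moreover have "M ^\<^sub>m 2 = M * M" using M by (simp add: numeral_2_eq_2)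
    moreover have "B ^\<^sub>m 2 = B * B" using B by (simp add: numeral_2_eq_2)
    ultimately show ?thesis by simp
  qed
  have trMM: "mtr (M * M) = (\<Sum>i<n. \<Sum>j<n. M $$ (i,j) * M $$ (j,i))"
    unfolding mtr_def using M by (auto simp: scalar_prod_def lessThan_atLeast0 intro!: sum.cong)
  have BBd: "(B * B) $$ (i,i) = (B $$ (i,i))^2" if i: "i < n" for i
  proof -
    have "(B * B) $$ (i,i) = (\<Sum>k\<in>{0..<n}. B $$ (i,k) * B $$ (k,i))"
      using B i by (simp add: scalar_prod_def)
    also have "\<dots> = (\<Sum>k\<in>{i}. B $$ (i,k) * B $$ (k,i))"
    proof (rule sum.mono_neutral_right)
      show "\<forall>k\<in>{0..<n} - {i}. B $$ (i, k) * B $$ (k, i) = 0"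
      proof
        fix k assume k: "k \<in> {0..<n} - {i}"
        show "B $$ (i, k) * B $$ (k, i) = 0"
        proof (cases "k < i")
          case True then show ?thesis using ut B i by (auto simp: upper_triangular_def)
        next
          case False then have "i < k" using k by auto
          then show ?thesis using ut B k by (auto simp: upper_triangular_def)
        qed
      qed
    qed (use i in auto)
    finally show ?thesis by (simp add: power2_eq_square)
  qed
  have "mtr (M * M) = mtr (B * B)" unfolding MM using B by (intro mtr_similar[OF P _ Q QP]) auto
  also have "\<dots> = (\<Sum>i<n. (B*B) $$ (i,i))" using B by (simp add: mtr_def)
  also have "\<dots> = (\<Sum>i<n. (B $$ (i,i))^2)" by (intro sum.cong refl) (rule BBd, simp)
  also have "\<dots> = (\<Sum>e\<leftarrow>es. e^2)" unfolding es
    by (simp add: sum_list_sum_nth lessThan_atLeast0 o_def)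
  finally show "(\<Sum>e\<leftarrow>es. e^2) = (\<Sum>i<n. \<Sum>j<n. M $$ (i,j) * M $$ (j,i))" using trMM by simp
qed

lemma mset_sum_replicate: "(\<Sum>x\<in>set_mset A. replicate_mset (count A x) x) = A"
proof (rule multiset_eqI)
  fix y
  have "count (\<Sum>x\<in>set_mset A. replicate_mset (count A x) x) y
      = (\<Sum>x\<in>set_mset A. count (replicate_mset (count A x) x) y)"
    by (simp add: count_sum)
  also have "\<dots> = (\<Sum>x\<in>set_mset A. if x = y then count A x else 0)"
    by (intro sum.cong refl) auto
  also have "\<dots> = count A y" by (simp add: sum.delta not_in_iff)
  finally show "count (\<Sum>x\<in>set_mset A. replicate_mset (count A x) x) y = count A y" .
qed

lemma eigvals_mset_split:
  assumes cp: "char_poly M = (\<Prod>e\<leftarrow>es. [:- e, 1:])"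
  shows "eigvals_mset M = mset es"
proof -
  let ?p = "char_poly M"
  have lf: "\<And>e. (0::real poly) \<noteq> [:- e, 1:]" by simp
  have nz: "(\<Prod>e\<leftarrow>es. [:- e, 1:]) \<noteq> (0 :: real poly)"
    unfolding prod_list_zero_iff using lf by auto
  have pr0: "proots (\<Prod>e\<leftarrow>xs. [:- e, 1:]) = mset xs" for xs :: "real list"
  proof (induction xs)
    case (Cons a xs)
    have n1: "(\<Prod>e\<leftarrow>xs. [:- e, 1:]) \<noteq> (0 :: real poly)"
      unfolding prod_list_zero_iff using lf by auto
    have "proots (\<Prod>e\<leftarrow>a # xs. [:- e, 1:]) = proots [:- a, 1:] + proots (\<Prod>e\<leftarrow>xs. [:- e, 1:])"
      using n1 lf[of a] by (simp only: prod_list.Cons list.map) (rule proots_mult, auto)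
    then show ?case using Cons by simp
  qed simp
  have pr: "proots ?p = mset es" unfolding cp by (rule pr0)
  have p0: "?p \<noteq> 0" using nz cp by simp
  have "eigvals_mset M = (\<Sum>x\<in>set_mset (proots ?p). replicate_mset (count (proots ?p) x) x)"
    unfolding eigvals_mset_def using p0 by simp
  also have "\<dots> = proots ?p" by (rule mset_sum_replicate)
  finally show ?thesis using pr by simp
qed

lemma root_in_list:
  assumes "poly (\<Prod>e\<leftarrow>es. [:- e, 1:]) (x::real) = 0" shows "x \<in> set es"
  using assms by (induction es) auto

lemma second_sorted_gt:
  fixes es :: "real list" and t :: real
  assumes "length es \<ge> 2" and "size (filter_mset (\<lambda>x. x \<le> t) (mset es)) \<le> 1"
  shows "sort es ! 1 > t"
proof (rule ccontr)
  assume "\<not> ?thesis"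
  then have b: "sort es ! 1 \<le> t" by simp
  have "length (sort es) \<ge> 2" using assms by simp
  then obtain a b' rest where L: "sort es = a # b' # rest"
    by (metis Suc_le_length_iff numeral_2_eq_2)
  have "sorted (sort es)" by simp
  then have "a \<le> b'" unfolding L by simp
  with b L have ab: "a \<le> t" "b' \<le> t" by auto
  have "mset es = mset (sort es)" by simp
  also have "\<dots> = {#a, b'#} + mset rest" unfolding L by simp
  finally have "filter_mset (\<lambda>x. x \<le> t) (mset es) = {#a, b'#} + filter_mset (\<lambda>x. x \<le> t) (mset rest)"
    using ab by simp
  then have "size (filter_mset (\<lambda>x. x \<le> t) (mset es)) \<ge> 2" by simp
  with assms(2) show False by simp
qed

lemma spectral_abstract:
  fixes M :: "real mat" and \<delta> :: real
  assumes M: "M \<in> carrier_mat n n" and sym: "\<And>i j. i < n \<Longrightarrow> j < n \<Longrightarrow> M $$ (i,j) = M $$ (j,i)"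
    and n2: "n \<ge> 2" and r0: "poly (char_poly M) 0 = 0" and r2: "poly (char_poly M) 2 = 0"
    and fro: "(\<Sum>i<n. \<Sum>j<n. (M $$ (i,j) - (if i = j then 1 else 0))^2) < 2 + \<delta>^2"
    and dpos: "\<delta> > 0"
  shows "sorted_list_of_multiset (eigvals_mset M) ! 1 > 1 - \<delta>"
proof -
  obtain es where cp: "char_poly M = (\<Prod>e\<leftarrow>es. [:- e, 1:])" and len: "length es = n"
    using sym_char_poly_real_split[OF M sym] by auto
  have ev: "eigvals_mset M = mset es" by (rule eigvals_mset_split[OF cp])
  have e0: "0 \<in> set es" using r0 cp root_in_list by metis
  have e2: "2 \<in> set es" using r2 cp root_in_list by metis
  note S1 = eig_sums(1)[OF M cp] and S2 = eig_sums(2)[OF M cp]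
  have rowid: "(\<Sum>j<n. (M $$ (i,j) - (if i = j then 1 else 0))^2) = (\<Sum>j<n. M $$ (i,j) * M $$ (j,i)) - 2 * M $$ (i,i) + 1"
    if i: "i < n" for i
  proof -
    have "(\<Sum>j<n. (M $$ (i,j) - (if i = j then 1 else 0))^2)
        = (\<Sum>j<n. M $$ (i,j) * M $$ (j,i) + (if i = j then 1 - 2 * M $$ (i,i) else 0))"
      by (intro sum.cong refl) (auto simp: power2_eq_square sym i algebra_simps)
    also have "\<dots> = (\<Sum>j<n. M $$ (i,j) * M $$ (j,i)) - 2 * M $$ (i,i) + 1"
      using i by (simp add: sum.distrib)
    finally show ?thesis .
  qed
  have "(\<Sum>e\<leftarrow>es. (e - 1)^2) = (\<Sum>e\<leftarrow>es. e^2) - 2 * sum_list es + real n"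
  proof -
    have "(\<Sum>e\<leftarrow>es. (e - 1)^2) = (\<Sum>e\<leftarrow>es. e^2 - 2 * e + 1)"
      by (simp add: power2_eq_square algebra_simps)
    also have "\<dots> = (\<Sum>e\<leftarrow>es. e^2) - 2 * sum_list es + real n"
    proof -
      have c1: "(\<Sum>e\<leftarrow>xs. (1::real)) = real (length xs)" for xs :: "real list" by (induction xs) auto
      show ?thesis using len by (simp add: sum_list_addf sum_list_subtractf sum_list_const_mult c1)
    qed
    finally show ?thesis .
  qed
  also have "\<dots> = (\<Sum>i<n. \<Sum>j<n. (M $$ (i,j) - (if i = j then 1 else 0))^2)"
    by (simp add: S1 S2 rowid sum.distrib sum_subtractf sum_distrib_left)
  finally have fro2: "(\<Sum>e\<leftarrow>es. (e - 1)^2) < 2 + \<delta>^2" using fro by simp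
  define R where "R = mset es - {#0#} - {#2#}"
  have mes: "mset es = add_mset 0 (add_mset 2 R)"
  proof -
    have a: "mset es = add_mset 0 (mset es - {#0#})" using e0 by simp
    have "2 \<in># mset es - {#0#}" using e2 by (simp add: in_diff_count)
    then have "mset es - {#0#} = add_mset 2 R" unfolding R_def by (metis insert_DiffM)
    with a show ?thesis by simp
  qed
  have "(\<Sum>e\<leftarrow>es. (e - 1)^2) = (\<Sum>e\<in>#mset es. (e - 1)^2)"
    by (simp add: sum_mset_sum_list[symmetric])
  also have "\<dots> = 2 + (\<Sum>e\<in>#R. (e - 1)^2)" unfolding mes by simp
  finally have sR: "(\<Sum>e\<in>#R. (e - 1)^2) < \<delta>^2" using fro2 by simp
  have big: "x > 1 - \<delta>" if x: "x \<in># R" for x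
  proof -
    obtain R' where "R = add_mset x R'" using x by (metis multi_member_split)
    then have "(\<Sum>e\<in>#R. (e - 1)^2) = (x - 1)^2 + (\<Sum>e\<in>#R'. (e - 1)^2)" by simp
    moreover have "(\<Sum>e\<in>#R'. (e - 1)^2) \<ge> 0" by (induction R') simp_all
    ultimately have "(x - 1)^2 < \<delta>^2" using sR by simp
    then have "\<bar>x - 1\<bar>^2 < \<delta>^2" by simp
    then have "\<bar>x - 1\<bar> < \<delta>" by (rule power_less_imp_less_base) (use dpos in auto)
    then show ?thesis by simp
  qed
  have fR: "filter_mset (\<lambda>x. x \<le> 1 - \<delta>) R = {#}"
    unfolding filter_mset_eq_mempty_iff using big by (meson not_le)
  have f2: "\<not> (2::real) \<le> 1 - \<delta>" using dpos by simp
  have "filter_mset (\<lambda>x. x \<le> 1 - \<delta>) (mset es) = (if 0 \<le> 1 - \<delta> then {#0#} else {#})"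
    unfolding mes using f2 fR by simp
  then have "size (filter_mset (\<lambda>x. x \<le> 1 - \<delta>) (mset es)) \<le> 1"
    by simp
  then have "sort es ! 1 > 1 - \<delta>" using second_sorted_gt[of es "1 - \<delta>"] len n2 by simp
  then show ?thesis unfolding ev by simp
qed


lemma diag_sandwich:
  fixes D A :: "real mat"
  assumes D: "D \<in> carrier_mat n n" and A: "A \<in> carrier_mat n n"
    and dg: "\<And>i l. i < n \<Longrightarrow> l < n \<Longrightarrow> i \<noteq> l \<Longrightarrow> D $$ (i,l) = 0"
    and i: "i < n" and j: "j < n"
  shows "(D * A * D) $$ (i,j) = D $$ (i,i) * A $$ (i,j) * D $$ (j,j)"
proof -
  have DA: "(D * A) $$ (i,k) = D $$ (i,i) * A $$ (i,k)" if i: "i < n" and k: "k < n" for i k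
  proof -
    have "(D * A) $$ (i,k) = (\<Sum>l\<in>{0..<n}. D $$ (i,l) * A $$ (l,k))"
      using D A i k by (simp add: scalar_prod_def)
    also have "\<dots> = (\<Sum>l\<in>{i}. D $$ (i,l) * A $$ (l,k))"
      by (rule sum.mono_neutral_right) (use i dg in auto)
    finally show ?thesis by simp
  qed
  have "(D * A * D) $$ (i,j) = (\<Sum>k\<in>{0..<n}. (D * A) $$ (i,k) * D $$ (k,j))"
    using D A i j by (simp add: scalar_prod_def del: assoc_mult_mat)
  also have "\<dots> = (\<Sum>k\<in>{j}. (D * A) $$ (i,k) * D $$ (k,j))"
    by (rule sum.mono_neutral_right) (use j dg in auto)
  also have "\<dots> = D $$ (i,i) * A $$ (i,j) * D $$ (j,j)" using DA[OF i j] by simp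
  finally show ?thesis .
qed

lemma norm_laplacian_entries:
  fixes V :: "nat set" and E
  defines "vs \<equiv> sorted_list_of_set V"
  assumes fin: "finite V"
  shows "norm_laplacian V E \<in> carrier_mat (card V) (card V)"
    and "\<And>i j. i < card V \<Longrightarrow> j < card V \<Longrightarrow> norm_laplacian V E $$ (i,j) =
          (if i = j then 1 else 0) - (if (vs ! i, vs ! j) \<in> E then 1 / (sqrt (real (deg V E (vs ! i))) * sqrt (real (deg V E (vs ! j)))) else 0)"
proof -
  have len: "length vs = card V" unfolding vs_def using fin by simp
  let ?D = "deg_inv_sqrt_mat V E" and ?A = "adj_mat V E"
  have D: "?D \<in> carrier_mat (card V) (card V)" unfolding deg_inv_sqrt_mat_def Let_def using len vs_def by simp
  have A: "?A \<in> carrier_mat (card V) (card V)" unfolding adj_mat_def Let_def using len vs_def by simp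
  show "norm_laplacian V E \<in> carrier_mat (card V) (card V)" unfolding norm_laplacian_def using D A
    by (intro minus_carrier_mat mult_carrier_mat)
  fix i j assume i: "i < card V" and j: "j < card V"
  have dg: "\<And>i l. i < card V \<Longrightarrow> l < card V \<Longrightarrow> i \<noteq> l \<Longrightarrow> ?D $$ (i,l) = 0"
    unfolding deg_inv_sqrt_mat_def Let_def using len vs_def by simp
  have Dii: "?D $$ (i,i) = 1 / sqrt (real (deg V E (vs ! i)))" if "i < card V" for i
    unfolding deg_inv_sqrt_mat_def Let_def using len vs_def that by simp
  have Aij: "?A $$ (i,j) = (if (vs ! i, vs ! j) \<in> E then 1 else 0)"
    unfolding adj_mat_def Let_def using len vs_def i j by simp
  have "norm_laplacian V E $$ (i,j) = 1\<^sub>m (card V) $$ (i,j) - (?D * ?A * ?D) $$ (i,j)"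
    unfolding norm_laplacian_def using D A i j by (simp del: assoc_mult_mat)
  also have "(?D * ?A * ?D) $$ (i,j) = ?D $$ (i,i) * ?A $$ (i,j) * ?D $$ (j,j)"
    by (rule diag_sandwich[OF D A dg i j])
  finally show "norm_laplacian V E $$ (i,j) =
          (if i = j then 1 else 0) - (if (vs ! i, vs ! j) \<in> E then 1 / (sqrt (real (deg V E (vs ! i))) * sqrt (real (deg V E (vs ! j)))) else 0)"
    using i j by (simp add: Dii Aij)
qed

lemma sum_nth_sorted:
  assumes "finite V"
  shows "(\<Sum>j<card V. f (sorted_list_of_set V ! j)) = (\<Sum>v\<in>V. f v)"
proof -
  have "bij_betw ((!) (sorted_list_of_set V)) {..<card V} V"
    by (rule bij_betw_nth) (use assms in auto)
  then show ?thesis by (rule sum.reindex_bij_betw)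
qed

lemma deg_sum:
  assumes "finite V"
  shows "real (deg V E u) = (\<Sum>w\<in>V. if (u,w) \<in> E then 1 else 0)"
  unfolding deg_def using assms by (simp add: sum.inter_filter[symmetric])

lemma laplacian_apply:
  fixes V :: "nat set" and E and c :: "nat \<Rightarrow> real"
  defines "vs \<equiv> sorted_list_of_set V"
  defines "x \<equiv> vec (card V) (\<lambda>j. c (vs ! j) * sqrt (real (deg V E (vs ! j))))"
  assumes fin: "finite V" and dpos: "\<forall>v\<in>V. deg V E v > 0" and i: "i < card V"
    and irr: "\<forall>v. (v,v) \<notin> E"
  shows "(norm_laplacian V E *\<^sub>v x) $ i = x $ i - (\<Sum>w\<in>V. if (vs ! i, w) \<in> E then c w else 0) / sqrt (real (deg V E (vs ! i)))"
proof -
  let ?M = "norm_laplacian V E" and ?n = "card V"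
  let ?d = "\<lambda>j. real (deg V E (vs ! j))"
  have M: "?M \<in> carrier_mat ?n ?n" using norm_laplacian_entries(1)[OF fin] .
  have setvs: "set vs = V" and lenvs: "length vs = ?n" unfolding vs_def using fin by auto
  have dj: "?d j > 0" if "j < ?n" for j
    using dpos that setvs lenvs nth_mem by fastforce
  have "(?M *\<^sub>v x) $ i = (\<Sum>j<?n. ?M $$ (i,j) * x $ j)"
    using M i by (simp add: mult_mat_vec_def scalar_prod_def x_def lessThan_atLeast0)
  also have "\<dots> = (\<Sum>j<?n. (if i = j then x $ j else 0) - (if (vs ! i, vs ! j) \<in> E then c (vs ! j) / sqrt (?d i) else 0))"
  proof (intro sum.cong refl)
    fix j assume j: "j \<in> {..<?n}"
    have sj: "sqrt (?d j) > 0" using dj j by simp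
    have jl: "j < ?n" using j by simp
    have e: "?M $$ (i,j) = (if i = j then 1 else 0) - (if (vs ! i, vs ! j) \<in> E then 1 / (sqrt (?d i) * sqrt (?d j)) else 0)"
      using norm_laplacian_entries(2)[where E=E, OF fin i jl] unfolding vs_def by simp
    have xj: "x $ j = c (vs ! j) * sqrt (?d j)" unfolding x_def using jl by simp
    show "?M $$ (i,j) * x $ j = (if i = j then x $ j else 0) - (if (vs ! i, vs ! j) \<in> E then c (vs ! j) / sqrt (?d i) else 0)"
    proof (cases "i = j")
      case True then show ?thesis using e irr by simp
    next
      case False then show ?thesis unfolding e xj using sj by auto
    qed
  qed
  also have "\<dots> = x $ i - (\<Sum>j<?n. if (vs ! i, vs ! j) \<in> E then c (vs ! j) else 0) / sqrt (?d i)"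
    using i by (simp add: sum_subtractf sum_divide_distrib if_distrib[of "\<lambda>t. t / sqrt (?d i)"] cong: if_cong)
  also have "(\<Sum>j<?n. if (vs ! i, vs ! j) \<in> E then c (vs ! j) else 0) = (\<Sum>w\<in>V. if (vs ! i, w) \<in> E then c w else 0)"
    unfolding vs_def by (rule sum_nth_sorted[OF fin])
  finally show ?thesis .
qed

lemma graph_gap:
  fixes V :: "nat set" and E and \<sigma> :: "nat \<Rightarrow> real" and \<delta> :: real
  assumes fin: "finite V" and n2: "card V \<ge> 2"
    and symE: "\<forall>u v. (u,v) \<in> E \<longrightarrow> (v,u) \<in> E" and irr: "\<forall>v. (v,v) \<notin> E"
    and dpos: "\<forall>v\<in>V. deg V E v > 0"
    and bip: "\<forall>u\<in>V. \<forall>v\<in>V. (u,v) \<in> E \<longrightarrow> \<sigma> v = - \<sigma> u"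
    and snz: "\<forall>v. \<sigma> v \<noteq> 0"
    and fro: "(\<Sum>u\<in>V. \<Sum>v\<in>V. if (u,v) \<in> E then 1 / (real (deg V E u) * real (deg V E v)) else 0) < 2 + \<delta>^2"
    and \<delta>: "\<delta> > 0"
  shows "gap_greater (1 - \<delta>) (V, E)"
proof -
  define vs where "vs = sorted_list_of_set V"
  let ?M = "norm_laplacian V E" and ?n = "card V"
  let ?d = "\<lambda>j. real (deg V E (vs ! j))"
  have M: "?M \<in> carrier_mat ?n ?n" using norm_laplacian_entries(1)[OF fin] .
  have setvs: "set vs = V" and lenvs: "length vs = ?n" unfolding vs_def using fin by auto
  have vsV: "vs ! j \<in> V" if "j < ?n" for j using that setvs lenvs nth_mem by fastforce
  have dj: "?d j > 0" if "j < ?n" for j using dpos vsV[OF that] by simp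
  have e: "?M $$ (i,j) = (if i = j then 1 else 0) - (if (vs ! i, vs ! j) \<in> E then 1 / (sqrt (?d i) * sqrt (?d j)) else 0)"
    if "i < ?n" "j < ?n" for i j
    using norm_laplacian_entries(2)[where E=E, OF fin that] unfolding vs_def by simp
  have sym: "?M $$ (i,j) = ?M $$ (j,i)" if "i < ?n" "j < ?n" for i j
    using e[OF that] e[OF that(2,1)] symE by (auto simp: mult.commute)
  have degs: "(\<Sum>w\<in>V. if (u, w) \<in> E then 1 else 0) = real (deg V E u)" for u
    using deg_sum[OF fin] by simp
  have ev: "eigenvalue ?M k" if c: "\<forall>v. c v \<noteq> 0" and
     cs: "\<And>i. i < ?n \<Longrightarrow> (\<Sum>w\<in>V. if (vs ! i, w) \<in> E then c w else 0) = (1 - k) * c (vs ! i) * ?d i" for c k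
  proof -
    define x where "x = vec ?n (\<lambda>j. c (vs ! j) * sqrt (?d j))"
    have x: "x \<in> carrier_vec ?n" unfolding x_def by simp
    have "x $ 0 \<noteq> 0" unfolding x_def using n2 c dj[of 0] by simp
    then have xnz: "x \<noteq> 0\<^sub>v ?n" using n2 by auto
    have "?M *\<^sub>v x = k \<cdot>\<^sub>v x"
    proof (rule eq_vecI)
      show "dim_vec (?M *\<^sub>v x) = dim_vec (k \<cdot>\<^sub>v x)" using M x by simp
      fix i assume "i < dim_vec (k \<cdot>\<^sub>v x)"
      then have i: "i < ?n" using x by simp
      have sd: "sqrt (?d i) > 0" using dj[OF i] by simp
      have "(?M *\<^sub>v x) $ i = x $ i - (\<Sum>w\<in>V. if (vs ! i, w) \<in> E then c w else 0) / sqrt (?d i)"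
        using laplacian_apply[OF fin dpos i irr, of c] unfolding x_def vs_def by simp
      also have "\<dots> = x $ i - (1 - k) * c (vs ! i) * (?d i / sqrt (?d i))" by (simp add: cs[OF i])
      also have "?d i / sqrt (?d i) = sqrt (?d i)" using dj[OF i] by (simp add: real_div_sqrt)
      also have "x $ i - (1 - k) * c (vs ! i) * sqrt (?d i) = k * x $ i" unfolding x_def using i
        by (simp add: algebra_simps)
      finally show "(?M *\<^sub>v x) $ i = (k \<cdot>\<^sub>v x) $ i" using i x by simp
    qed
    then show ?thesis unfolding eigenvalue_def eigenvector_def using x xnz M by auto
  qed
  have ev0: "eigenvalue ?M 0"
  proof (rule ev[of "\<lambda>_. 1"])
    fix i assume i: "i < ?n"
    show "(\<Sum>w\<in>V. if (vs ! i, w) \<in> E then 1 else 0) = (1 - 0) * 1 * ?d i" using degs by simp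
  qed simp
  have ev2: "eigenvalue ?M 2"
  proof (rule ev[of \<sigma>])
    fix i assume i: "i < ?n"
    have "(\<Sum>w\<in>V. if (vs ! i, w) \<in> E then \<sigma> w else 0) = (\<Sum>w\<in>V. - \<sigma> (vs ! i) * (if (vs ! i, w) \<in> E then 1 else 0))"
      using bip vsV[OF i] by (intro sum.cong refl) auto
    also have "\<dots> = - \<sigma> (vs ! i) * (\<Sum>w\<in>V. if (vs ! i, w) \<in> E then 1 else 0)"
      by (rule sum_distrib_left[symmetric])
    also have "\<dots> = - \<sigma> (vs ! i) * ?d i" by (simp only: degs)
    finally show "(\<Sum>w\<in>V. if (vs ! i, w) \<in> E then \<sigma> w else 0) = (1 - 2) * \<sigma> (vs ! i) * ?d i" by simp
  qed (use snz in simp)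
  have r0: "poly (char_poly ?M) 0 = 0" using ev0 eigenvalue_root_char_poly[OF M] by simp
  have r2: "poly (char_poly ?M) 2 = 0" using ev2 eigenvalue_root_char_poly[OF M] by simp
  have "(\<Sum>i<?n. \<Sum>j<?n. (?M $$ (i,j) - (if i = j then 1 else 0))^2)
      = (\<Sum>i<?n. \<Sum>j<?n. if (vs ! i, vs ! j) \<in> E then 1 / (?d i * ?d j) else 0)"
  proof (intro sum.cong refl)
    fix i j assume i: "i \<in> {..<?n}" and j: "j \<in> {..<?n}"
    have "0 < ?d i" "0 < ?d j" using dj i j by auto
    then show "(?M $$ (i,j) - (if i = j then 1 else 0))^2 = (if (vs ! i, vs ! j) \<in> E then 1 / (?d i * ?d j) else 0)"
      using e[of i j] i j by (auto simp: power2_eq_square real_sqrt_mult[symmetric])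
  qed
  also have "\<dots> = (\<Sum>u\<in>V. \<Sum>v\<in>V. if (u,v) \<in> E then 1 / (real (deg V E u) * real (deg V E v)) else 0)"
    unfolding vs_def
    by (subst sum_nth_sorted[OF fin], subst sum_nth_sorted[OF fin]) simp
  finally have fro': "(\<Sum>i<?n. \<Sum>j<?n. (?M $$ (i,j) - (if i = j then 1 else 0))^2) < 2 + \<delta>^2"
    using fro by simp
  have "sorted_list_of_multiset (eigvals_mset ?M) ! 1 > 1 - \<delta>"
    by (rule spectral_abstract[OF M sym n2 r0 r2 fro' \<delta>])
  then show ?thesis unfolding gap_greater_def spectral_gap_def using n2 dpos by simp
qed

lemma fro_half:
  fixes V A B :: "nat set" and E and c :: real
  assumes fin: "finite V" and AV: "A \<subseteq> V" and BV: "B \<subseteq> V" and Bne: "B \<noteq> {}"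
    and nb: "\<forall>u\<in>A. \<forall>v\<in>V. (u,v) \<in> E \<longrightarrow> v \<in> B"
    and dA: "\<forall>u\<in>A. real (deg V E u) > 0"
    and dB: "\<forall>v\<in>B. real (deg V E v) \<ge> c * card A" and c: "c > 0"
  shows "(\<Sum>u\<in>A. \<Sum>v\<in>V. if (u,v) \<in> E then 1 / (real (deg V E u) * real (deg V E v)) else 0) \<le> 1 / c"
proof (cases "A = {}")
  case True then show ?thesis using c by simp
next
  case False
  have finA: "finite A" using fin AV finite_subset by auto
  have cA: "real (card A) > 0" using False finA by (simp add: card_gt_0_iff)
  have inner: "(\<Sum>v\<in>V. if (u,v) \<in> E then 1 / (real (deg V E u) * real (deg V E v)) else 0)
      \<le> 1 / (c * card A)" if u: "u \<in> A" for u
  proof -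
    have du: "real (deg V E u) > 0" using dA u by simp
    have "(\<Sum>v\<in>V. if (u,v) \<in> E then 1 / (real (deg V E u) * real (deg V E v)) else 0)
        \<le> (\<Sum>v\<in>V. if (u,v) \<in> E then 1 / (real (deg V E u) * (c * card A)) else 0)"
    proof (rule sum_mono)
      fix v assume v: "v \<in> V"
      show "(if (u,v) \<in> E then 1 / (real (deg V E u) * real (deg V E v)) else 0)
          \<le> (if (u,v) \<in> E then 1 / (real (deg V E u) * (c * card A)) else 0)"
      proof (cases "(u,v) \<in> E")
        case True
        then have "v \<in> B" using nb u v by blast
        then have "real (deg V E v) \<ge> c * card A" using dB by blast
        moreover have "c * card A > 0" using c cA by simp
        ultimately show ?thesis using True du
          by (simp add: frac_le mult_left_mono)
      qed simp
    qed
    also have "\<dots> = (1 / (real (deg V E u) * (c * card A))) * (\<Sum>v\<in>V. if (u,v) \<in> E then 1 else 0)"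
      by (simp add: sum_distrib_left if_distrib cong: if_cong)
    also have "(\<Sum>v\<in>V. if (u,v) \<in> E then 1 else 0) = real (deg V E u)"
      using deg_sum[OF fin] by simp
    also have "1 / (real (deg V E u) * (c * card A)) * real (deg V E u) = 1 / (c * card A)"
      using du by simp
    finally show ?thesis .
  qed
  have "(\<Sum>u\<in>A. \<Sum>v\<in>V. if (u,v) \<in> E then 1 / (real (deg V E u) * real (deg V E v)) else 0)
      \<le> (\<Sum>u\<in>A. 1 / (c * card A))" by (rule sum_mono) (rule inner)
  also have "\<dots> = 1 / c" using cA c by simp
  finally show ?thesis .
qed

lemma fro_bound:
  fixes V A B :: "nat set" and E and c :: real
  assumes fin: "finite V" and V: "V = A \<union> B" and disj: "A \<inter> B = {}" and Ane: "A \<noteq> {}" and Bne: "B \<noteq> {}"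
    and nbA: "\<forall>u\<in>A. \<forall>v\<in>V. (u,v) \<in> E \<longrightarrow> v \<in> B"
    and nbB: "\<forall>u\<in>B. \<forall>v\<in>V. (u,v) \<in> E \<longrightarrow> v \<in> A"
    and dA: "\<forall>u\<in>A. real (deg V E u) \<ge> c * card B"
    and dB: "\<forall>v\<in>B. real (deg V E v) \<ge> c * card A" and c: "c > 0"
  shows "(\<Sum>u\<in>V. \<Sum>v\<in>V. if (u,v) \<in> E then 1 / (real (deg V E u) * real (deg V E v)) else 0) \<le> 2 / c"
proof -
  have finA: "finite A" and finB: "finite B" using fin V by auto
  have cA: "real (card A) > 0" and cB: "real (card B) > 0" using Ane Bne finA finB by (auto simp: card_gt_0_iff)
  have dA': "\<forall>u\<in>A. real (deg V E u) > 0" using dA c cB by (meson less_le_trans mult_pos_pos)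
  have dB': "\<forall>u\<in>B. real (deg V E u) > 0" using dB c cA by (meson less_le_trans mult_pos_pos)
  have "(\<Sum>u\<in>V. \<Sum>v\<in>V. if (u,v) \<in> E then 1 / (real (deg V E u) * real (deg V E v)) else 0)
     = (\<Sum>u\<in>A. \<Sum>v\<in>V. if (u,v) \<in> E then 1 / (real (deg V E u) * real (deg V E v)) else 0)
     + (\<Sum>u\<in>B. \<Sum>v\<in>V. if (u,v) \<in> E then 1 / (real (deg V E u) * real (deg V E v)) else 0)"
    unfolding V by (rule sum.union_disjoint) (use finA finB disj in auto)
  also have "\<dots> \<le> 1 / c + 1 / c"
    by (intro add_mono fro_half[OF fin _ _ Bne nbA dA' dB c] fro_half[OF fin _ _ Ane nbB dB' dA c]) (use V in auto)
  finally show ?thesis by simp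
qed

definition GrH :: "nat \<Rightarrow> (nat \<Rightarrow> lab) \<Rightarrow> (nat \<times> nat \<Rightarrow> bool) \<Rightarrow> nat set \<times> (nat \<times> nat) set" where
  "GrH N lab e = ({i. i < N \<and> lab i \<noteq> Out},
     {(i, j). i < N \<and> j < N \<and> i \<noteq> j \<and> lab i \<noteq> Out \<and> lab j \<noteq> Out \<and> e (min i j, max i j)})"

lemma deg_side:
  fixes N lab e X Y
  defines "V \<equiv> fst (GrH N lab e)" and "E \<equiv> snd (GrH N lab e)"
  assumes X: "X = {i. i < N \<and> lab i = l}" and Y: "Y = {i. i < N \<and> lab i = l'}" and ll: "l \<noteq> l'"
    and lOut: "l \<noteq> Out" "l' \<noteq> Out" and VXY: "V = X \<union> Y"
    and same: "\<forall>i j. i < N \<longrightarrow> j < N \<longrightarrow> i \<noteq> j \<longrightarrow> lab i = lab j \<longrightarrow> \<not> e (min i j, max i j)"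
    and u: "u \<in> X"
  shows "real (deg V E u) = real (card Y) - real (card {v\<in>Y. \<not> e (min u v, max u v)})"
proof -
  have finY: "finite Y" unfolding Y by simp
  have "{w\<in>V. (u,w) \<in> E} = {v\<in>Y. e (min u v, max u v)}"
  proof (rule subset_antisym; rule subsetI)
    fix w assume "w \<in> {w\<in>V. (u,w) \<in> E}"
    then have w: "w \<in> V" "(u,w) \<in> E" by auto
    then have "e (min u w, max u w)" "u \<noteq> w" "w < N" "u < N" unfolding E_def GrH_def by auto
    moreover have "w \<notin> X" using same u X calculation by auto
    ultimately show "w \<in> {v\<in>Y. e (min u v, max u v)}" using w VXY by auto
  next
    fix w assume "w \<in> {v\<in>Y. e (min u v, max u v)}"
    then have w: "w \<in> Y" "e (min u w, max u w)" by auto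
    then have "u \<noteq> w" using u X Y ll by auto
    then show "w \<in> {w\<in>V. (u,w) \<in> E}" using w u X Y lOut VXY unfolding E_def GrH_def V_def by auto
  qed
  moreover have "{v\<in>Y. e (min u v, max u v)} = Y - {v\<in>Y. \<not> e (min u v, max u v)}" by auto
  moreover have "card (Y - {v\<in>Y. \<not> e (min u v, max u v)}) = card Y - card {v\<in>Y. \<not> e (min u v, max u v)}"
    by (rule card_Diff_subset) (use finY in auto)
  moreover have "card {v\<in>Y. \<not> e (min u v, max u v)} \<le> card Y" by (rule card_mono) (use finY in auto)
  ultimately show ?thesis unfolding deg_def by (simp add: of_nat_diff)
qed

lemma det_gap:
  fixes N lab e and \<eta> \<delta> :: real
  defines "A \<equiv> {i. i < N \<and> lab i = InA}" and "B \<equiv> {i. i < N \<and> lab i = InB}"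
  assumes Ane: "A \<noteq> {}" and Bne: "B \<noteq> {}"
    and same: "\<forall>i j. i < N \<longrightarrow> j < N \<longrightarrow> i \<noteq> j \<longrightarrow> lab i = lab j \<longrightarrow> \<not> e (min i j, max i j)"
    and missA: "\<forall>u\<in>A. real (card {v\<in>B. \<not> e (min u v, max u v)}) \<le> \<eta> * card B"
    and missB: "\<forall>u\<in>B. real (card {v\<in>A. \<not> e (min u v, max u v)}) \<le> \<eta> * card A"
    and \<eta>: "\<eta> < 1" and fro: "2 / (1 - \<eta>) < 2 + \<delta>^2" and \<delta>: "\<delta> > 0"
  shows "gap_greater (1 - \<delta>) (GrH N lab e)"
proof -
  define V where "V = fst (GrH N lab e)"
  define E where "E = snd (GrH N lab e)"
  have G: "GrH N lab e = (V, E)" unfolding V_def E_def by simp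
  have VAB: "V = A \<union> B" unfolding V_def GrH_def A_def B_def by (auto intro: lab.exhaust)
  have disj: "A \<inter> B = {}" unfolding A_def B_def by auto
  have fin: "finite V" unfolding V_def GrH_def by simp
  have finA: "finite A" and finB: "finite B" unfolding A_def B_def by auto
  have cA: "card A \<ge> 1" and cB: "card B \<ge> 1" using Ane Bne finA finB by (auto simp: Suc_le_eq card_gt_0_iff)
  have c: "1 - \<eta> > 0" using \<eta> by simp
  have degA: "real (deg V E u) \<ge> (1 - \<eta>) * card B" if u: "u \<in> A" for u
  proof -
    have "real (deg V E u) = real (card B) - real (card {v\<in>B. \<not> e (min u v, max u v)})"
      unfolding V_def E_def
      by (rule deg_side[of A N lab InA B InB]) (use u same VAB in \<open>auto simp: A_def B_def V_def\<close>)
    then show ?thesis using missA[rule_format, OF u] by (simp add: algebra_simps)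
  qed
  have degB: "real (deg V E u) \<ge> (1 - \<eta>) * card A" if u: "u \<in> B" for u
  proof -
    have "real (deg V E u) = real (card A) - real (card {v\<in>A. \<not> e (min u v, max u v)})"
      unfolding V_def E_def
      by (rule deg_side[of B N lab InB A InA]) (use u same VAB in \<open>auto simp: A_def B_def V_def\<close>)
    then show ?thesis using missB[rule_format, OF u] by (simp add: algebra_simps)
  qed
  have Einfo: "(u,v) \<in> E \<longleftrightarrow> u < N \<and> v < N \<and> u \<noteq> v \<and> lab u \<noteq> Out \<and> lab v \<noteq> Out \<and> e (min u v, max u v)" for u v
    unfolding E_def GrH_def by auto
  have nbA: "\<forall>u\<in>A. \<forall>v\<in>V. (u,v) \<in> E \<longrightarrow> v \<in> B"
  proof (intro ballI impI)
    fix u v assume u: "u \<in> A" and v: "v \<in> V" and uv: "(u,v) \<in> E"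
    then have "lab u \<noteq> lab v" using same Einfo by blast
    then show "v \<in> B" using u v VAB unfolding A_def B_def by auto
  qed
  have nbB: "\<forall>u\<in>B. \<forall>v\<in>V. (u,v) \<in> E \<longrightarrow> v \<in> A"
  proof (intro ballI impI)
    fix u v assume u: "u \<in> B" and v: "v \<in> V" and uv: "(u,v) \<in> E"
    then have "lab u \<noteq> lab v" using same Einfo by blast
    then show "v \<in> A" using u v VAB unfolding A_def B_def by auto
  qed
  have frob: "(\<Sum>u\<in>V. \<Sum>v\<in>V. if (u,v) \<in> E then 1 / (real (deg V E u) * real (deg V E v)) else 0) \<le> 2 / (1 - \<eta>)"
    by (rule fro_bound[OF fin VAB disj Ane Bne nbA nbB _ _ c]) (use degA degB in auto)
  define \<sigma> where "\<sigma> = (\<lambda>v. if lab v = InA then (1::real) else -1)"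
  have "gap_greater (1 - \<delta>) (V, E)"
  proof (rule graph_gap[of V E \<sigma>])
    show "finite V" by fact
    have "card V = card A + card B" unfolding VAB by (rule card_Un_disjoint) (use finA finB disj in auto)
    then show "2 \<le> card V" using cA cB by simp
    show "\<forall>u v. (u, v) \<in> E \<longrightarrow> (v, u) \<in> E" unfolding Einfo by (auto simp: min.commute max.commute)
    show "\<forall>v. (v, v) \<notin> E" unfolding Einfo by simp
    show "\<forall>v\<in>V. 0 < deg V E v"
    proof
      fix v assume "v \<in> V"
      then consider "v \<in> A" | "v \<in> B" using VAB by auto
      then show "0 < deg V E v"
      proof cases
        case 1
        have "(1 - \<eta>) * card B > 0" using c cB by simp
        then have "real (deg V E v) > 0" using degA[OF 1] by linarith
        then show ?thesis by simp
      next
        case 2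
        have "(1 - \<eta>) * card A > 0" using c cA by simp
        then have "real (deg V E v) > 0" using degB[OF 2] by linarith
        then show ?thesis by simp
      qed
    qed
    show "\<forall>u\<in>V. \<forall>v\<in>V. (u, v) \<in> E \<longrightarrow> \<sigma> v = - \<sigma> u"
    proof (intro ballI impI)
      fix u v assume u: "u \<in> V" and v: "v \<in> V" and uv: "(u, v) \<in> E"
      from u consider "u \<in> A" | "u \<in> B" using VAB by blast
      then show "\<sigma> v = - \<sigma> u"
      proof cases
        case 1
        then have "v \<in> B" using nbA v uv by blast
        then have "lab u = InA" "lab v = InB" using 1 unfolding A_def B_def by auto
        then show ?thesis unfolding \<sigma>_def by simp
      next
        case 2
        then have "v \<in> A" using nbB v uv by blast
        then have "lab u = InB" "lab v = InA" using 2 unfolding A_def B_def by auto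
        then show ?thesis unfolding \<sigma>_def by simp
      qed
    qed
    show "\<forall>v. \<sigma> v \<noteq> 0" unfolding \<sigma>_def by simp
    show "(\<Sum>u\<in>V. \<Sum>v\<in>V. if (u, v) \<in> E then 1 / (real (deg V E u) * real (deg V E v)) else 0) < 2 + \<delta>^2"
      using frob fro by linarith
    show "\<delta> > 0" by fact
  qed
  then show ?thesis unfolding G .
qed


lemma pi_event:
  assumes fin: "finite I" and T: "T \<subseteq> I"
  shows "measure_pmf.prob (Pi_pmf I d p) {f. \<forall>t\<in>T. f t \<in> X t} = (\<Prod>t\<in>T. measure_pmf.prob (p t) (X t))"
proof -
  have "{f. \<forall>t\<in>T. f t \<in> X t} = Pi I (\<lambda>t. if t \<in> T then X t else UNIV)"
    using T by (auto simp: Pi_def)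
  then have "measure_pmf.prob (Pi_pmf I d p) {f. \<forall>t\<in>T. f t \<in> X t}
      = (\<Prod>t\<in>I. measure_pmf.prob (p t) (if t \<in> T then X t else UNIV))"
    using measure_Pi_pmf_Pi[OF fin] by simp
  also have "\<dots> = (\<Prod>t\<in>I. if t \<in> T then measure_pmf.prob (p t) (X t) else 1)"
    by (intro prod.cong refl) auto
  also have "\<dots> = (\<Prod>t\<in>T. measure_pmf.prob (p t) (X t))"
    using T fin by (simp add: prod.If_cases Int_absorb1 Int_absorb2)
  finally show ?thesis .
qed

lemma many_bound:
  assumes fin: "finite I" and T: "T \<subseteq> I" and r: "\<forall>t\<in>T. measure_pmf.prob (p t) (X t) \<le> r"
  shows "measure_pmf.prob (Pi_pmf I d p) {f. m \<le> card {t\<in>T. f t \<in> X t}} \<le> real (card T choose m) * r ^ m"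
proof -
  have finT: "finite T" using fin T finite_subset by auto
  define Ss where "Ss = {S. S \<subseteq> T \<and> card S = m}"
  have finSs: "finite Ss" unfolding Ss_def using finT by simp
  have sub: "{f. m \<le> card {t\<in>T. f t \<in> X t}} \<subseteq> (\<Union>S\<in>Ss. {f. \<forall>t\<in>S. f t \<in> X t})"
  proof
    fix f assume "f \<in> {f. m \<le> card {t\<in>T. f t \<in> X t}}"
    then have "m \<le> card {t\<in>T. f t \<in> X t}" by simp
    then obtain S where S: "S \<subseteq> {t\<in>T. f t \<in> X t}" "card S = m" by (meson obtain_subset_with_card_n)
    then show "f \<in> (\<Union>S\<in>Ss. {f. \<forall>t\<in>S. f t \<in> X t})" unfolding Ss_def by auto
  qed
  have "measure_pmf.prob (Pi_pmf I d p) {f. m \<le> card {t\<in>T. f t \<in> X t}}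
      \<le> measure_pmf.prob (Pi_pmf I d p) (\<Union>S\<in>Ss. {f. \<forall>t\<in>S. f t \<in> X t})"
    by (rule measure_pmf.finite_measure_mono[OF sub]) simp
  also have "\<dots> \<le> (\<Sum>S\<in>Ss. measure_pmf.prob (Pi_pmf I d p) {f. \<forall>t\<in>S. f t \<in> X t})"
    by (rule measure_pmf.finite_measure_subadditive_finite[OF finSs]) simp
  also have "\<dots> \<le> (\<Sum>S\<in>Ss. r ^ m)"
  proof (rule sum_mono)
    fix S assume S: "S \<in> Ss"
    then have ST: "S \<subseteq> T" and cS: "card S = m" unfolding Ss_def by auto
    have "measure_pmf.prob (Pi_pmf I d p) {f. \<forall>t\<in>S. f t \<in> X t} = (\<Prod>t\<in>S. measure_pmf.prob (p t) (X t))"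
      by (rule pi_event[OF fin]) (use ST T in auto)
    also have "\<dots> \<le> (\<Prod>t\<in>S. r)"
      by (rule prod_mono) (use r ST in auto)
    also have "\<dots> = r ^ m" using cS by simp
    finally show "measure_pmf.prob (Pi_pmf I d p) {f. \<forall>t\<in>S. f t \<in> X t} \<le> r ^ m" .
  qed
  also have "\<dots> = real (card Ss) * r ^ m" by simp
  also have "card Ss = card T choose m" unfolding Ss_def by (rule n_subsets[OF finT])
  finally show ?thesis .
qed

lemma bind_bound:
  assumes c: "c \<ge> 0" and b: "\<And>x. x \<in> set_pmf p \<Longrightarrow> x \<notin> L \<Longrightarrow> measure_pmf.prob (f x) S \<le> c"
  shows "measure_pmf.prob (bind_pmf p f) S \<le> measure_pmf.prob p L + c"
proof -
  have "ennreal (measure_pmf.prob (bind_pmf p f) S) = emeasure (measure_pmf (bind_pmf p f)) S"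
    by (simp add: measure_pmf.emeasure_eq_measure)
  also have "\<dots> = (\<integral>\<^sup>+x. emeasure (measure_pmf (f x)) S \<partial>measure_pmf p)" by simp
  also have "\<dots> \<le> (\<integral>\<^sup>+x. (indicator L x + ennreal c) \<partial>measure_pmf p)"
  proof (rule nn_integral_mono_AE)
    show "AE x in measure_pmf p. emeasure (measure_pmf (f x)) S \<le> indicator L x + ennreal c"
    proof (rule AE_pmfI)
      fix x assume x: "x \<in> set_pmf p"
      show "emeasure (measure_pmf (f x)) S \<le> indicator L x + ennreal c"
      proof (cases "x \<in> L")
        case True
        have "emeasure (measure_pmf (f x)) S \<le> 1" by (simp add: measure_pmf.emeasure_le_1)
        also have "\<dots> \<le> indicator L x + ennreal c" using True by simp
        finally show ?thesis .
      next
        case False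
        have "emeasure (measure_pmf (f x)) S = ennreal (measure_pmf.prob (f x) S)"
          by (simp add: measure_pmf.emeasure_eq_measure)
        also have "\<dots> \<le> ennreal c" using b[OF x False] by (simp add: ennreal_leI)
        finally show ?thesis using False by simp
      qed
    qed
  qed
  also have "\<dots> = emeasure (measure_pmf p) L + ennreal c"
    by (subst nn_integral_add) (auto simp: measure_pmf.emeasure_space_1)
  also have "\<dots> = ennreal (measure_pmf.prob p L + c)"
    using c by (simp add: measure_pmf.emeasure_eq_measure ennreal_plus)
  finally have "ennreal (measure_pmf.prob (bind_pmf p f) S) \<le> ennreal (measure_pmf.prob p L + c)" .
  then show ?thesis using c by (simp add: ennreal_le_iff del: ennreal_plus)
qed

lemma label_pmf_prob:
  assumes p: "0 \<le> p" "2 * p \<le> 1"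
  shows "measure_pmf.prob (label_pmf p p) {l. l \<noteq> InB} = 1 - p"
    and "measure_pmf.prob (label_pmf p p) {l. l \<noteq> InA} = 1 - p"
proof -
  have wf: "pmf_of_list_wf [(InA, p), (InB, p), (Out, 1 - p - p)]"
    by (rule pmf_of_list_wfI) (use p in auto)
  show "measure_pmf.prob (label_pmf p p) {l. l \<noteq> InB} = 1 - p"
    unfolding label_pmf_def using measure_pmf_of_list[OF wf] by simp
  show "measure_pmf.prob (label_pmf p p) {l. l \<noteq> InA} = 1 - p"
    unfolding label_pmf_def using measure_pmf_of_list[OF wf] by simp
qed

lemma label_count_bound:
  fixes N k :: nat and p :: real and l :: lab
  assumes p: "0 \<le> p" "2 * p \<le> 1" and k: "1 \<le> k" "k \<le> N" and l: "l = InA \<or> l = InB"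
  shows "measure_pmf.prob (Pi_pmf {..<N} Out (\<lambda>_. label_pmf p p)) {lab. card {i. i < N \<and> lab i = l} < k}
         \<le> real N ^ k * (1 - p) ^ (N - k)"
proof -
  let ?P = "Pi_pmf {..<N} Out (\<lambda>_. label_pmf p p)"
  have r: "\<forall>t\<in>{..<N}. measure_pmf.prob (label_pmf p p) {x. x \<noteq> l} \<le> 1 - p"
    using label_pmf_prob[OF p] l by auto
  have sub: "{lab. card {i. i < N \<and> lab i = l} < k} \<subseteq> {lab. N - k + 1 \<le> card {t\<in>{..<N}. lab t \<in> {x. x \<noteq> l}}}"
  proof
    fix lab assume "lab \<in> {lab. card {i. i < N \<and> lab i = l} < k}"
    then have lt: "card {i. i < N \<and> lab i = l} < k" by simp
    have "card {i. i < N \<and> lab i = l} + card {t\<in>{..<N}. lab t \<in> {x. x \<noteq> l}} = card {..<N}"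
    proof -
      have "{..<N} = {i. i < N \<and> lab i = l} \<union> {t\<in>{..<N}. lab t \<in> {x. x \<noteq> l}}" by auto
      moreover have "card ({i. i < N \<and> lab i = l} \<union> {t\<in>{..<N}. lab t \<in> {x. x \<noteq> l}})
          = card {i. i < N \<and> lab i = l} + card {t\<in>{..<N}. lab t \<in> {x. x \<noteq> l}}"
        by (rule card_Un_disjoint) auto
      ultimately show ?thesis by metis
    qed
    then show "lab \<in> {lab. N - k + 1 \<le> card {t\<in>{..<N}. lab t \<in> {x. x \<noteq> l}}}" using lt k by simp
  qed
  have "measure_pmf.prob ?P {lab. card {i. i < N \<and> lab i = l} < k}
      \<le> measure_pmf.prob ?P {lab. N - k + 1 \<le> card {t\<in>{..<N}. lab t \<in> {x. x \<noteq> l}}}"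
    by (rule measure_pmf.finite_measure_mono[OF sub]) simp
  also have "\<dots> \<le> real (card {..<N} choose (N - k + 1)) * (1 - p) ^ (N - k + 1)"
    by (rule many_bound) (use r in auto)
  also have "\<dots> \<le> real N ^ k * (1 - p) ^ (N - k)"
  proof (rule mult_mono)
    have "N choose (N - k + 1) = N choose (k - 1)"
      using binomial_symmetric[of "N - k + 1" N] k by simp
    also have "\<dots> \<le> N ^ (k - 1)" by (rule binomial_le_pow) (use k in simp)
    also have "\<dots> \<le> N ^ k" using k by (intro power_increasing) auto
    finally show "real (card {..<N} choose (N - k + 1)) \<le> real N ^ k"
      by (simp flip: of_nat_power)
    show "(1 - p) ^ (N - k + 1) \<le> (1 - p) ^ (N - k)" using p by (intro power_decreasing) auto
  qed (use p in auto)
  finally show ?thesis .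
qed

lemma finite_PS: "finite {(i, j). i < j \<and> j < (N::nat)}"
  by (rule finite_subset[of _ "{..<N} \<times> {..<N}"]) auto

lemma edge_vertex_bound:
  fixes N :: nat and lab :: "nat \<Rightarrow> lab" and u :: nat and l l' :: lab and q :: real and m :: nat
  defines "Y \<equiv> {v. v < N \<and> lab v = l'}"
  assumes u: "u < N" "lab u = l" and ll: "(l = InA \<and> l' = InB) \<or> (l = InB \<and> l' = InA)"
    and q: "0 \<le> q" "q \<le> 1"
  shows "measure_pmf.prob (Pi_pmf {(i, j). i < j \<and> j < N} False
            (\<lambda>(i, j). bernoulli_pmf (edge_prob 0 0 (1 - q) (lab i) (lab j))))
           {e. m \<le> card {v\<in>Y. \<not> e (min u v, max u v)}} \<le> real (card Y choose m) * q ^ m"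
proof -
  define pr where "pr = (\<lambda>v. (min u v, max u v))"
  define T where "T = pr ` Y"
  have uY: "u \<notin> Y" unfolding Y_def using u ll by auto
  have inj: "inj_on pr Y"
  proof (rule inj_onI)
    fix v w assume v: "v \<in> Y" and w: "w \<in> Y" and eq: "pr v = pr w"
    have "v \<noteq> u" "w \<noteq> u" using v w uY by auto
    then show "v = w" using eq unfolding pr_def by (auto simp: min_def max_def split: if_splits)
  qed
  have TPS: "T \<subseteq> {(i, j). i < j \<and> j < N}"
  proof
    fix t assume "t \<in> T"
    then obtain v where v: "v \<in> Y" "t = pr v" unfolding T_def by auto
    then have "v \<noteq> u" "v < N" using uY unfolding Y_def by auto
    then show "t \<in> {(i, j). i < j \<and> j < N}" using v u unfolding pr_def by (auto simp: min_def max_def)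
  qed
  have cT: "card T = card Y" unfolding T_def by (rule card_image[OF inj])
  have ev: "{e. m \<le> card {v\<in>Y. \<not> e (min u v, max u v)}} = {e. m \<le> card {t\<in>T. e t \<in> {False}}}"
  proof -
    have "card {t\<in>T. e t \<in> {False}} = card {v\<in>Y. \<not> e (min u v, max u v)}" for e :: "nat \<times> nat \<Rightarrow> bool"
    proof -
      have "{t\<in>T. e t \<in> {False}} = pr ` {v\<in>Y. \<not> e (min u v, max u v)}" unfolding T_def pr_def by auto
      moreover have "inj_on pr {v\<in>Y. \<not> e (min u v, max u v)}" by (rule inj_on_subset[OF inj]) auto
      ultimately show ?thesis by (simp add: card_image)
    qed
    then show ?thesis by simp
  qed
  have r: "\<forall>t\<in>T. measure_pmf.prob ((\<lambda>(i, j). bernoulli_pmf (edge_prob 0 0 (1 - q) (lab i) (lab j))) t) {False} \<le> q"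
  proof
    fix t assume "t \<in> T"
    then obtain v where v: "v \<in> Y" "t = pr v" unfolding T_def by auto
    have lv: "lab v = l'" using v unfolding Y_def by auto
    have "edge_prob 0 0 (1 - q) (lab (min u v)) (lab (max u v)) = 1 - q"
      using ll u lv by (cases "u \<le> v") (auto simp: edge_prob_def min_def max_def)
    then show "measure_pmf.prob ((\<lambda>(i, j). bernoulli_pmf (edge_prob 0 0 (1 - q) (lab i) (lab j))) t) {False} \<le> q"
      using v q unfolding pr_def by (simp add: measure_pmf_single)
  qed
  show ?thesis unfolding ev using many_bound[OF finite_PS TPS r, of False m] cT by simp
qed

lemma qpow_bound:
  fixes q \<eta> :: real and m s :: nat
  assumes q: "0 \<le> q" "q \<le> 1" and \<eta>: "\<eta> > 0" and q4: "q powr \<eta> \<le> 1/4"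
    and m: "real m \<ge> \<eta> * s" and m1: "m \<ge> 1"
  shows "q ^ m \<le> (1/4) ^ s"
proof (cases "q = 0")
  case True then show ?thesis using m1 by (simp add: zero_power)
next
  case False
  then have qp: "q > 0" using q by simp
  have "q ^ m = q powr real m" using qp by (simp add: powr_realpow)
  also have "\<dots> \<le> q powr (\<eta> * s)" by (rule powr_mono'[OF m]) (use q in auto)
  also have "\<dots> = (q powr \<eta>) powr real s" by (simp add: powr_powr)
  also have "\<dots> \<le> (1/4) powr real s" by (rule powr_mono2) (use q4 in auto)
  also have "\<dots> = (1/4) ^ s" by (simp add: powr_realpow)
  finally show ?thesis .
qed

lemma fl_lt: "x < real c \<Longrightarrow> \<lfloor>x\<rfloor> < int c"
  by (simp add: floor_less_iff)

lemma vertex_bad_bound: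
  fixes N :: nat and lab :: "nat \<Rightarrow> lab" and u :: nat and l l' :: lab and q \<eta> :: real
  defines "Y \<equiv> {v. v < N \<and> lab v = l'}"
  assumes u: "u < N" "lab u = l" and ll: "(l = InA \<and> l' = InB) \<or> (l = InB \<and> l' = InA)"
    and q: "0 \<le> q" "q \<le> 1" and \<eta>: "\<eta> > 0" and q4: "q powr \<eta> \<le> 1/4"
  shows "measure_pmf.prob (Pi_pmf {(i, j). i < j \<and> j < N} False
            (\<lambda>(i, j). bernoulli_pmf (edge_prob 0 0 (1 - q) (lab i) (lab j))))
           {e. real (card {v\<in>Y. \<not> e (min u v, max u v)}) > \<eta> * card Y} \<le> (1/2) ^ card Y"
proof -
  define m where "m = nat \<lfloor>\<eta> * card Y\<rfloor> + 1"
  have fl0: "\<lfloor>\<eta> * card Y\<rfloor> \<ge> 0" using \<eta> by simp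
  have mge: "real m \<ge> \<eta> * card Y" unfolding m_def using fl0
    by (smt (verit, best) of_int_floor_le of_nat_1 of_nat_add of_nat_nat real_of_int_floor_add_one_ge)
  have sub: "{e. real (card {v\<in>Y. \<not> e (min u v, max u v)}) > \<eta> * card Y}
      \<subseteq> {e. m \<le> card {v\<in>Y. \<not> e (min u v, max u v)}}"
  proof
    fix e assume "e \<in> {e. real (card {v\<in>Y. \<not> e (min u v, max u v)}) > \<eta> * card Y}"
    then have "real (card {v\<in>Y. \<not> e (min u v, max u v)}) > \<eta> * card Y" by simp
    then have "int (card {v\<in>Y. \<not> e (min u v, max u v)}) > \<lfloor>\<eta> * card Y\<rfloor>"
      by (rule fl_lt)
    then have "nat \<lfloor>\<eta> * card Y\<rfloor> < card {v\<in>Y. \<not> e (min u v, max u v)}" using fl0 by (simp add: nat_less_iff)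
    then show "e \<in> {e. m \<le> card {v\<in>Y. \<not> e (min u v, max u v)}}" unfolding m_def by simp
  qed
  have "measure_pmf.prob (Pi_pmf {(i, j). i < j \<and> j < N} False
            (\<lambda>(i, j). bernoulli_pmf (edge_prob 0 0 (1 - q) (lab i) (lab j))))
           {e. real (card {v\<in>Y. \<not> e (min u v, max u v)}) > \<eta> * card Y}
       \<le> measure_pmf.prob (Pi_pmf {(i, j). i < j \<and> j < N} False
            (\<lambda>(i, j). bernoulli_pmf (edge_prob 0 0 (1 - q) (lab i) (lab j))))
           {e. m \<le> card {v\<in>Y. \<not> e (min u v, max u v)}}"
    by (rule measure_pmf.finite_measure_mono[OF sub]) simp
  also have "\<dots> \<le> real (card Y choose m) * q ^ m"
    unfolding Y_def by (rule edge_vertex_bound[where N=N and lab=lab and u=u and l=l and l'=l', OF u ll q])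
  also have "\<dots> \<le> 2 ^ card Y * (1/4) ^ card Y"
  proof (rule mult_mono)
    show "real (card Y choose m) \<le> 2 ^ card Y"
      using binomial_le_pow2[of "card Y" m] by (simp flip: of_nat_power)
    show "q ^ m \<le> (1/4) ^ card Y" by (rule qpow_bound[OF q \<eta> q4 mge]) (simp add: m_def)
  qed (use q in auto)
  also have "\<dots> = (1/2) ^ card Y" by (simp add: power_mult_distrib[symmetric])
  finally show ?thesis .
qed

lemma random_H_alt:
  "random_H N p p 0 0 q1 = bind_pmf (Pi_pmf {..<N} Out (\<lambda>_. label_pmf p p))
     (\<lambda>lab. map_pmf (GrH N lab) (Pi_pmf {(i, j). i < j \<and> j < N} False
              (\<lambda>(i, j). bernoulli_pmf (edge_prob 0 0 q1 (lab i) (lab j)))))"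
  unfolding random_H_def map_pmf_def GrH_def by simp

lemma support_same:
  fixes N :: nat and lab :: "nat \<Rightarrow> lab"
  assumes e: "e \<in> set_pmf (Pi_pmf {(i, j). i < j \<and> j < N} False
              (\<lambda>(i, j). bernoulli_pmf (edge_prob 0 0 q1 (lab i) (lab j))))"
  shows "\<forall>i j. i < N \<longrightarrow> j < N \<longrightarrow> i \<noteq> j \<longrightarrow> lab i = lab j \<longrightarrow> \<not> e (min i j, max i j)"
proof (intro allI impI)
  fix i j assume ij: "i < N" "j < N" "i \<noteq> j" "lab i = lab j"
  have "min i j < max i j" "max i j < N" using ij by (auto simp: min_def max_def)
  then have mem: "(min i j, max i j) \<in> {(i, j). i < j \<and> j < N}" by simp
  have "e (min i j, max i j) \<in> set_pmf (bernoulli_pmf (edge_prob 0 0 q1 (lab (min i j)) (lab (max i j))))"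
    using e mem unfolding set_Pi_pmf[OF finite_PS] PiE_dflt_def by auto
  moreover have "lab (min i j) = lab (max i j)" using ij by (simp add: min_def max_def)
  then have "edge_prob 0 0 q1 (lab (min i j)) (lab (max i j)) = 0"
    by (cases "lab (min i j)") (auto simp: edge_prob_def)
  ultimately have "e (min i j, max i j) \<in> set_pmf (bernoulli_pmf 0)" by simp
  moreover have "True \<notin> set_pmf (bernoulli_pmf 0)" by (simp add: set_pmf_iff)
  ultimately show "\<not> e (min i j, max i j)" by (metis (full_types))
qed

lemma main_prob:
  fixes N k :: nat and p q \<eta> \<delta> :: real
  assumes p: "0 \<le> p" "2 * p \<le> 1" and q: "0 \<le> q" "q \<le> 1" and \<eta>: "0 < \<eta>" "\<eta> < 1"
    and q4: "q powr \<eta> \<le> 1/4" and k: "1 \<le> k" "k \<le> N"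
    and fro: "2 / (1 - \<eta>) < 2 + \<delta>^2" and \<delta>: "\<delta> > 0"
  shows "measure_pmf.prob (random_H N p p 0 0 (1 - q)) {G. \<not> gap_greater (1 - \<delta>) G}
         \<le> 2 * (real N ^ k * (1 - p) ^ (N - k)) + real N * (1/2) ^ k"
proof -
  let ?LP = "Pi_pmf {..<N} Out (\<lambda>_. label_pmf p p)"
  let ?EP = "\<lambda>lab. Pi_pmf {(i, j). i < j \<and> j < N} False
              (\<lambda>(i, j). bernoulli_pmf (edge_prob 0 0 (1 - q) (lab i) (lab j)))"
  let ?S = "{G. \<not> gap_greater (1 - \<delta>) G}"
  define L where "L = {lab. card {i. i < N \<and> lab i = InA} < k} \<union> {lab. card {i. i < N \<and> lab i = InB} < k}"
  have PL: "measure_pmf.prob ?LP L \<le> 2 * (real N ^ k * (1 - p) ^ (N - k))"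
  proof -
    have "measure_pmf.prob ?LP L \<le> measure_pmf.prob ?LP {lab. card {i. i < N \<and> lab i = InA} < k}
        + measure_pmf.prob ?LP {lab. card {i. i < N \<and> lab i = InB} < k}"
      unfolding L_def by (rule measure_Un_le) auto
    also have "\<dots> \<le> real N ^ k * (1 - p) ^ (N - k) + real N ^ k * (1 - p) ^ (N - k)"
      by (intro add_mono label_count_bound[OF p k]) auto
    finally show ?thesis by simp
  qed
  have stage2: "measure_pmf.prob (map_pmf (GrH N lab) (?EP lab)) ?S \<le> real N * (1/2) ^ k"
    if lab: "lab \<notin> L" for lab
  proof -
    define A where "A = {i. i < N \<and> lab i = InA}"
    define B where "B = {i. i < N \<and> lab i = InB}"
    have cA: "card A \<ge> k" and cB: "card B \<ge> k" using lab unfolding L_def A_def B_def by auto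
    have finA: "finite A" and finB: "finite B" unfolding A_def B_def by auto
    define BA where "BA = (\<lambda>u. {e. real (card {v\<in>B. \<not> e (min u v, max u v)}) > \<eta> * card B})"
    define BB where "BB = (\<lambda>u. {e. real (card {v\<in>A. \<not> e (min u v, max u v)}) > \<eta> * card A})"
    have sub: "GrH N lab -` ?S \<inter> set_pmf (?EP lab) \<subseteq> (\<Union>u\<in>A. BA u) \<union> (\<Union>u\<in>B. BB u)"
    proof
      fix e assume e: "e \<in> GrH N lab -` ?S \<inter> set_pmf (?EP lab)"
      show "e \<in> (\<Union>u\<in>A. BA u) \<union> (\<Union>u\<in>B. BB u)"
      proof (rule ccontr)
        assume "e \<notin> (\<Union>u\<in>A. BA u) \<union> (\<Union>u\<in>B. BB u)"
        then have mA: "\<forall>u\<in>A. real (card {v\<in>B. \<not> e (min u v, max u v)}) \<le> \<eta> * card B"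
          and mB: "\<forall>u\<in>B. real (card {v\<in>A. \<not> e (min u v, max u v)}) \<le> \<eta> * card A"
          unfolding BA_def BB_def by (auto simp: not_less)
        have "A \<noteq> {}" "B \<noteq> {}" using cA cB k by auto
        then have "gap_greater (1 - \<delta>) (GrH N lab e)"
          using det_gap[of N lab e \<eta> \<delta>] support_same[of e N "1 - q" lab] e mA mB \<eta> fro \<delta>
          unfolding A_def B_def by blast
        then show False using e by simp
      qed
    qed
    have bA: "measure_pmf.prob (?EP lab) (BA u) \<le> (1/2) ^ k" if u: "u \<in> A" for u
    proof -
      have "measure_pmf.prob (?EP lab) (BA u) \<le> (1/2) ^ card B"
        unfolding BA_def B_def
        by (rule vertex_bad_bound[where l=InA and l'=InB]) (use u q \<eta> q4 in \<open>auto simp: A_def\<close>)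
      also have "\<dots> \<le> (1/2) ^ k" using cB by (intro power_decreasing) auto
      finally show ?thesis .
    qed
    have bB: "measure_pmf.prob (?EP lab) (BB u) \<le> (1/2) ^ k" if u: "u \<in> B" for u
    proof -
      have "measure_pmf.prob (?EP lab) (BB u) \<le> (1/2) ^ card A"
        unfolding BB_def A_def
        by (rule vertex_bad_bound[where l=InB and l'=InA]) (use u q \<eta> q4 in \<open>auto simp: B_def\<close>)
      also have "\<dots> \<le> (1/2) ^ k" using cA by (intro power_decreasing) auto
      finally show ?thesis .
    qed
    have cAB: "card A + card B \<le> N"
    proof -
      have "card A + card B = card (A \<union> B)"
        by (rule card_Un_disjoint[symmetric]) (use finA finB in \<open>auto simp: A_def B_def\<close>)
      also have "\<dots> \<le> card {..<N}" by (rule card_mono) (auto simp: A_def B_def)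
      finally show ?thesis by simp
    qed
    have "measure_pmf.prob (map_pmf (GrH N lab) (?EP lab)) ?S = measure_pmf.prob (?EP lab) (GrH N lab -` ?S)"
      by simp
    also have "\<dots> = measure_pmf.prob (?EP lab) (GrH N lab -` ?S \<inter> set_pmf (?EP lab))"
      by (simp add: measure_Int_set_pmf)
    also have "\<dots> \<le> measure_pmf.prob (?EP lab) ((\<Union>u\<in>A. BA u) \<union> (\<Union>u\<in>B. BB u))"
      by (rule measure_pmf.finite_measure_mono[OF sub]) simp
    also have "\<dots> \<le> measure_pmf.prob (?EP lab) (\<Union>u\<in>A. BA u) + measure_pmf.prob (?EP lab) (\<Union>u\<in>B. BB u)"
      by (rule measure_Un_le) auto
    also have "\<dots> \<le> (\<Sum>u\<in>A. measure_pmf.prob (?EP lab) (BA u)) + (\<Sum>u\<in>B. measure_pmf.prob (?EP lab) (BB u))"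
      by (intro add_mono measure_pmf.finite_measure_subadditive_finite) (use finA finB in auto)
    also have "\<dots> \<le> (\<Sum>u\<in>A. (1/2) ^ k) + (\<Sum>u\<in>B. (1/2) ^ k)"
      by (intro add_mono sum_mono bA bB)
    also have "\<dots> = real (card A + card B) * (1/2) ^ k" by (simp add: algebra_simps)
    also have "\<dots> \<le> real N * (1/2) ^ k" using cAB by (intro mult_right_mono) auto
    finally show ?thesis .
  qed
  have "measure_pmf.prob (random_H N p p 0 0 (1 - q)) ?S
      = measure_pmf.prob (bind_pmf ?LP (\<lambda>lab. map_pmf (GrH N lab) (?EP lab))) ?S"
    by (simp only: random_H_alt)
  also have "\<dots> \<le> measure_pmf.prob ?LP L + real N * (1/2) ^ k"
    by (rule bind_bound) (use stage2 in auto)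
  also have "\<dots> \<le> 2 * (real N ^ k * (1 - p) ^ (N - k)) + real N * (1/2) ^ k"
    using PL by simp
  finally show ?thesis .
qed


lemma pow_exp_bound:
  fixes p :: real and m :: nat
  assumes "0 \<le> p" "p \<le> 1"
  shows "(1 - p) ^ m \<le> exp (- p * m)"
proof -
  have "(1 - p) ^ m \<le> exp (- p) ^ m"
    by (rule power_mono) (use assms exp_ge_add_one_self[of "-p"] in auto)
  also have "\<dots> = exp (- p * m)" by (simp add: exp_of_nat_mult[symmetric] mult.commute)
  finally show ?thesis .
qed

lemma aux_lin: "(L::real) = - (T/2) + aX/2 \<Longrightarrow> aX \<le> X \<Longrightarrow> L \<le> - (T/2 - X/2)"
  by linarith

lemma final_ineq:
  fixes n N k d :: nat and \<alpha> \<beta> C p q t :: real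
  assumes n1: "n \<ge> 1" and \<beta>: "\<beta> = 1 - d * \<alpha>" "\<beta> > 0" and t: "t = real n powr (\<beta>/2)"
    and k: "k = nat \<lceil>t\<rceil>" and N: "N = n - 2 * d" and tn: "t + 1 \<le> real n - 2 * d"
    and p: "p = real n powr (- real d * \<alpha>) * (1 - q) ^ d" and q1: "(1 - q) ^ d \<ge> 1/2" "0 \<le> q" "q \<le> 1"
    and pd: "real n powr (- real d * \<alpha>) \<le> 1/2"
    and H1: "(t+1)*(2/\<beta>)*ln t - t^2/2 + (2*d+t+1)/2 + C*(2/\<beta>)*ln t + ln 4 \<le> 0"
    and H2: "(2/\<beta>)*ln t - t*ln 2 + C*(2/\<beta>)*ln t + ln 2 \<le> 0"
  shows "2 * (real N ^ k * (1 - p) ^ (N - k)) + real N * (1/2) ^ k \<le> real n powr (- C)"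
proof -
  define L where "L = ln (real n)"
  have npos: "real n > 0" using n1 by simp
  have L0: "L \<ge> 0" unfolding L_def using n1 by simp
  have tpos: "t > 0" unfolding t using npos by simp
  have lnt: "(2/\<beta>) * ln t = L" unfolding t L_def using \<beta> npos by simp
  have t2: "t^2 = real n powr \<beta>" unfolding t using npos
    by (simp add: power2_eq_square powr_add[symmetric])
  have kt: "real k \<ge> t" "real k \<le> t + 1" unfolding k using tpos by linarith+
  have Nn: "real N = real n - 2 * d" unfolding N using tn tpos by (simp add: of_nat_diff)
  have kN: "k \<le> N" using kt Nn tn by linarith
  have NK: "real (N - k) \<ge> real n - 2 * d - (t + 1)" using kN kt Nn by (simp add: of_nat_diff)
  have NK0: "real n - 2 * d - (t + 1) \<ge> 0" using tn by simp
  have nC: "real n powr (- C) = exp (- C * L)" unfolding L_def using npos by (simp add: powr_def)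
  define a where "a = real n powr (- real d * \<alpha>)"
  have a0: "a \<ge> 0" "a \<le> 1" using pd unfolding a_def by auto
  have an: "a * real n = t^2"
  proof -
    have "t^2 = real n powr (1 + (- real d * \<alpha>))" using t2 \<beta>(1) by (simp add: algebra_simps)
    also have "\<dots> = real n powr 1 * a" unfolding a_def by (rule powr_add)
    also have "real n powr 1 = real n" using npos by simp
    finally show ?thesis by simp
  qed
  have p0: "0 \<le> p" "p \<le> 1" unfolding p using a0 q1 unfolding a_def
    by (auto intro!: mult_le_one power_le_one)
  have pa: "p \<ge> a / 2" unfolding p a_def[symmetric] using q1 a0 by (simp add: mult_left_mono[of "1/2" _ a, simplified])
  have T1a: "real N ^ k \<le> exp ((t + 1) * L)"
  proof -
    have "real N ^ k \<le> real n ^ k" using Nn by (intro power_mono) auto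
    also have "\<dots> = exp (real k * L)" unfolding L_def using npos by (simp add: exp_of_nat_mult)
    also have "\<dots> \<le> exp ((t + 1) * L)" using kt L0 by (simp add: mult_right_mono)
    finally show ?thesis .
  qed
  have T1b: "(1 - p) ^ (N - k) \<le> exp (- (t^2/2 - (2*d+t+1)/2))"
  proof -
    have "(1 - p) ^ (N - k) \<le> exp (- p * real (N - k))" by (rule pow_exp_bound[OF p0])
    also have "\<dots> \<le> exp (- (a/2) * (real n - 2 * d - (t + 1)))"
    proof -
      have "(a/2) * (real n - 2 * d - (t + 1)) \<le> p * real (N - k)"
        by (rule mult_mono) (use pa NK NK0 p0 a0 in auto)
      then show ?thesis by simp
    qed
    also have "\<dots> \<le> exp (- (t^2/2 - (2*d+t+1)/2))"
    proof -
      have e1: "- (a/2) * (real n - 2 * d - (t + 1)) = - (t^2/2) + a * (2*d+t+1)/2" using an by (simp add: algebra_simps)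
      have e2: "a * (2*d+t+1) \<le> 2*d+t+1" using a0 tpos by (simp add: mult_left_le_one_le)
      have "- (a/2) * (real n - 2 * d - (t + 1)) \<le> - (t^2/2 - (2*d+t+1)/2)" 
        using e1 e2 by (rule aux_lin)
      then show ?thesis by (simp only: exp_le_cancel_iff)
    qed
    finally show ?thesis .
  qed
  have T1: "2 * (real N ^ k * (1 - p) ^ (N - k)) \<le> real n powr (- C) / 2"
  proof -
    have "2 * (real N ^ k * (1 - p) ^ (N - k)) \<le> 2 * (exp ((t + 1) * L) * exp (- (t^2/2 - (2*d+t+1)/2)))"
      using T1a T1b p0 by (intro mult_left_mono mult_mono) auto
    also have "\<dots> = exp ((t + 1) * L - (t^2/2 - (2*d+t+1)/2) + ln 2)"
      by (simp add: exp_add exp_diff)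
    also have "\<dots> \<le> exp (- C * L - ln 2)"
    proof -
      have "ln 4 = 2 * ln (2::real)" using ln_realpow[of 2 2] by simp
      then show ?thesis using H1 unfolding lnt[symmetric] by (simp add: algebra_simps)
    qed
    also have "\<dots> = real n powr (- C) / 2" unfolding nC by (simp add: exp_diff)
    finally show ?thesis .
  qed
  have T2: "real N * (1/2) ^ k \<le> real n powr (- C) / 2"
  proof -
    have "(1/2::real) ^ k = (1/2) powr real k" by (simp add: powr_realpow)
    also have "\<dots> \<le> (1/2) powr t" by (rule powr_mono') (use kt in auto)
    also have "\<dots> = exp (- t * ln 2)" by (simp add: powr_def ln_div)
    finally have h: "(1/2::real) ^ k \<le> exp (- t * ln 2)" .
    have "real N * (1/2) ^ k \<le> real n * exp (- t * ln 2)"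
      using h Nn by (intro mult_mono) auto
    also have "\<dots> = exp (L - t * ln 2)" unfolding L_def using npos by (simp add: exp_diff exp_minus field_simps)
    also have "\<dots> \<le> exp (- C * L - ln 2)" using H2 unfolding lnt[symmetric] by (simp add: algebra_simps)
    also have "\<dots> = real n powr (- C) / 2" unfolding nC by (simp add: exp_diff)
    finally show ?thesis .
  qed
  show ?thesis using T1 T2 by simp
qed


lemma asy1:
  fixes b D C :: real
  shows "eventually (\<lambda>t. (t+1)*(2/b)*ln t - t^2/2 + (D+t+1)/2 + C*(2/b)*ln t + ln 4 \<le> 0) at_top"
  by real_asymp

lemma asy2:
  fixes b C :: real
  shows "eventually (\<lambda>t. (2/b)*ln t - t*ln 2 + C*(2/b)*ln t + ln 2 \<le> 0) at_top"
  by real_asymp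

lemma asy3:
  fixes D :: real
  shows "eventually (\<lambda>x. x powr (1/2) + 1 \<le> x - D) at_top"
  by real_asymp

theorem lemma6p8:
  fixes d :: nat and \<alpha> \<delta> :: real
  assumes "d \<ge> 1" and "\<alpha> > 0" and "\<alpha> < 1 / real d" and "\<delta> > 0"
  shows "\<forall>C > 0. eventually (\<lambda>n::nat.
           measure_pmf.prob
             (random_H (n - 2 * d)
                (real n powr (- real d * \<alpha>) * (1 - real n powr (- \<alpha>)) ^ d)
                (real n powr (- real d * \<alpha>) * (1 - real n powr (- \<alpha>)) ^ d)
                0 0 (1 - real n powr (- \<alpha>)))
             {G. gap_greater (1 - \<delta>) G}
           \<ge> 1 - real n powr (- C)) at_top"
proof (intro allI impI)
  fix C :: real assume C: "C > 0"
  have d1: "d \<ge> 1" and \<alpha>: "\<alpha> > 0" "\<alpha> < 1 / real d" and \<delta>: "\<delta> > 0" using assms by auto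
  define \<beta> where "\<beta> = 1 - d * \<alpha>"
  have \<beta>0: "\<beta> > 0"
  proof -
    have "real d * \<alpha> < real d * (1 / real d)" using \<alpha> d1 by (intro mult_strict_left_mono) auto
    then show ?thesis unfolding \<beta>_def using d1 by simp
  qed
  define \<eta> where "\<eta> = \<delta>^2 / (4 + \<delta>^2)"
  have d2: "\<delta>^2 > 0" using \<delta> by simp
  have d4: "4 + \<delta>^2 > 0" using d2 by linarith
  have \<eta>: "0 < \<eta>" "\<eta> < 1" unfolding \<eta>_def using d2 d4 by (simp_all only: divide_pos_pos divide_less_eq_1_pos)
  have fro: "2 / (1 - \<eta>) < 2 + \<delta>^2"
  proof -
    have "1 - \<eta> = 4 / (4 + \<delta>^2)" unfolding \<eta>_def using d4 by (simp add: field_simps)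
    then have "2 / (1 - \<eta>) = 2 / (4 / (4 + \<delta>^2))" by simp
    also have "\<dots> = 2 + \<delta>^2 / 2" using d4 by (simp add: field_simps)
    finally have "2 / (1 - \<eta>) = 2 + \<delta>^2 / 2" .
    then show ?thesis using \<delta> by simp
  qed
  have tlim: "filterlim (\<lambda>n::nat. real n powr (\<beta>/2)) at_top sequentially"
    by (rule filterlim_compose[OF real_powr_at_top filterlim_real_sequentially]) (use \<beta>0 in simp)
  have ev1: "eventually (\<lambda>n::nat. n \<ge> 1) sequentially" by (rule eventually_ge_at_top)
  have ev2: "eventually (\<lambda>n::nat. real n powr (- real d * \<alpha>) < 1/2) sequentially"
  proof -
    have "((\<lambda>n::nat. real n powr (- real d * \<alpha>)) \<longlongrightarrow> 0) sequentially"
      by (rule tendsto_neg_powr) (use d1 \<alpha> in \<open>auto intro: filterlim_real_sequentially\<close>)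
    then show ?thesis by (rule order_tendstoD) simp
  qed
  have ev3: "eventually (\<lambda>n::nat. (1 - real n powr (- \<alpha>)) ^ d > 1/2) sequentially"
  proof -
    have "((\<lambda>n::nat. real n powr (- \<alpha>)) \<longlongrightarrow> 0) sequentially"
      by (rule tendsto_neg_powr) (use \<alpha> in \<open>auto intro: filterlim_real_sequentially\<close>)
    then have "((\<lambda>n::nat. (1 - real n powr (- \<alpha>)) ^ d) \<longlongrightarrow> (1 - 0) ^ d) sequentially"
      by (intro tendsto_intros)
    then show ?thesis by (rule order_tendstoD) simp
  qed
  have ev4: "eventually (\<lambda>n::nat. real n powr (- \<alpha> * \<eta>) < 1/4) sequentially"
  proof -
    have "((\<lambda>n::nat. real n powr (- \<alpha> * \<eta>)) \<longlongrightarrow> 0) sequentially"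
      by (rule tendsto_neg_powr) (use \<alpha> \<eta> in \<open>auto intro: filterlim_real_sequentially\<close>)
    then show ?thesis by (rule order_tendstoD) simp
  qed
  have ev5: "eventually (\<lambda>n::nat. real n powr (1/2) + 1 \<le> real n - 2 * d) sequentially"
    by (rule eventually_compose_filterlim[OF asy3[of "real (2 * d)"] filterlim_real_sequentially])
  have ev6: "eventually (\<lambda>n::nat. let t = real n powr (\<beta>/2) in
      (t+1)*(2/\<beta>)*ln t - t^2/2 + (2*d+t+1)/2 + C*(2/\<beta>)*ln t + ln 4 \<le> 0) sequentially"
    unfolding Let_def by (rule eventually_compose_filterlim[OF asy1[of _ "real (2 * d)"] tlim])
  have ev7: "eventually (\<lambda>n::nat. let t = real n powr (\<beta>/2) in
      (2/\<beta>)*ln t - t*ln 2 + C*(2/\<beta>)*ln t + ln 2 \<le> 0) sequentially"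
    unfolding Let_def by (rule eventually_compose_filterlim[OF asy2 tlim])
  show "eventually (\<lambda>n::nat.
           measure_pmf.prob
             (random_H (n - 2 * d)
                (real n powr (- real d * \<alpha>) * (1 - real n powr (- \<alpha>)) ^ d)
                (real n powr (- real d * \<alpha>) * (1 - real n powr (- \<alpha>)) ^ d)
                0 0 (1 - real n powr (- \<alpha>)))
             {G. gap_greater (1 - \<delta>) G}
           \<ge> 1 - real n powr (- C)) at_top"
    using ev1 ev2 ev3 ev4 ev5 ev6 ev7
  proof eventually_elim
    case (elim n)
    define t where "t = real n powr (\<beta>/2)"
    define q where "q = real n powr (- \<alpha>)"
    define p where "p = real n powr (- real d * \<alpha>) * (1 - q) ^ d"
    define N where "N = n - 2 * d"
    define k where "k = nat \<lceil>t\<rceil>"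
    have n1: "n \<ge> 1" using elim by simp
    have npos: "real n > 0" using n1 by simp
    have tpos: "t > 0" unfolding t_def using npos by simp
    have q01: "0 \<le> q" "q \<le> 1"
    proof -
      show "0 \<le> q" unfolding q_def by simp
      have "1 \<le> real n powr \<alpha>" using n1 \<alpha> by (intro ge_one_powr_ge_zero) auto
      then show "q \<le> 1" unfolding q_def powr_minus by (rule inverse_le_1_iff[THEN iffD2, OF disjI2])
    qed
    have qd: "(1 - q) ^ d \<ge> 1/2" "(1 - q) ^ d \<le> 1" using elim q01 unfolding q_def
      by (auto intro: power_le_one)
    have p0: "0 \<le> p" unfolding p_def using q01 by simp
    have p2: "2 * p \<le> 1"
    proof -
      have "p \<le> real n powr (- real d * \<alpha>)" unfolding p_def using qd
        by (intro mult_left_le) auto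
      then show ?thesis using elim by simp
    qed
    have q4: "q powr \<eta> \<le> 1/4" unfolding q_def using elim by (simp add: powr_powr)
    have tle: "t \<le> real n powr (1/2)" unfolding t_def
      by (rule powr_mono) (use \<beta>0 n1 \<beta>_def \<alpha> d1 in \<open>auto simp: \<beta>_def\<close>)
    have tn: "t + 1 \<le> real n - 2 * d" using tle elim by simp
    have "1 \<le> \<lceil>t\<rceil>" using tpos by (simp add: le_ceiling_iff)
    then have k1: "1 \<le> k" unfolding k_def by linarith
    have kN: "k \<le> N"
    proof -
      have "real k \<le> t + 1" unfolding k_def using tpos by linarith
      then have "real k \<le> real n - 2 * d" using tn by simp
      then show ?thesis unfolding N_def by linarith
    qed
    have bound: "measure_pmf.prob (random_H N p p 0 0 (1 - q)) {G. \<not> gap_greater (1 - \<delta>) G}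
         \<le> 2 * (real N ^ k * (1 - p) ^ (N - k)) + real N * (1/2) ^ k"
      by (rule main_prob[OF p0 p2 q01 \<eta> q4 k1 kN fro \<delta>])
    also have "\<dots> \<le> real n powr (- C)"
      by (rule final_ineq[OF n1 \<beta>_def \<beta>0 t_def k_def N_def tn p_def qd(1) q01 _ ])
         (use elim in \<open>auto simp: t_def Let_def\<close>)
    finally have nb: "measure_pmf.prob (random_H N p p 0 0 (1 - q)) {G. \<not> gap_greater (1 - \<delta>) G} \<le> real n powr (- C)" .
    have "measure_pmf.prob (random_H N p p 0 0 (1 - q)) {G. gap_greater (1 - \<delta>) G}
        = 1 - measure_pmf.prob (random_H N p p 0 0 (1 - q)) {G. \<not> gap_greater (1 - \<delta>) G}"
    proof -
      have "{G. gap_greater (1 - \<delta>) G} = space (measure_pmf (random_H N p p 0 0 (1 - q))) - {G. \<not> gap_greater (1 - \<delta>) G}"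
        by auto
      moreover have "measure_pmf.prob (random_H N p p 0 0 (1 - q)) (space (measure_pmf (random_H N p p 0 0 (1 - q))) - {G. \<not> gap_greater (1 - \<delta>) G})
          = 1 - measure_pmf.prob (random_H N p p 0 0 (1 - q)) {G. \<not> gap_greater (1 - \<delta>) G}"
        by (rule measure_pmf.prob_compl) simp
      ultimately show ?thesis by simp
    qed
    then show ?case using nb unfolding N_def p_def q_def by simp
  qed
qed

end
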